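(* Let $s\in\mathbb N$ and $f\in C^\infty([0,1]^s)$ satisfy $\|f^{|\boldsymbol\kappa|}\|_1\le K_1\alpha^{\|\boldsymbol\kappa\|_0}$ for all $\boldsymbol k\in\mathbb N_0^s$, for some positive constants $K_1,\alpha$. Let $N_m$ be as in the context and $\mathrm{SUM}_{2,m}=\sum_{\boldsymbol k\in\mathbb N_*^s\setminus Q_{N_m}}Z(\boldsymbol k)S(\boldsymbol k)\hat f(\boldsymbol k)$. Then there exist a constant $D_1$ and a threshold $\underline m_1$ depending on $s$ and $\alpha$ such that for all $m\ge\underline m_1$, $$|\mathrm{SUM}_{2,m}|\le\sum_{\boldsymbol k\in\mathbb N_*^s\setminus Q_{N_m}}|\hat f(\boldsymbol k)|<K_12^{-N_m+D_1\sqrt{N_m}}.$$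
   Context: Binary digits: for $k\in\mathbb N_0$, $k=\sum_{\ell\ge1}a_\ell2^{\ell-1}$, $\vec k=(a_1,a_2,\dots)$, $\kappa=\{\ell:a_\ell=1\}$; $\vec x$ the binary digits of $x\in[0,1)$. For $\boldsymbol k\in\mathbb N_0^s$ with digit sets $\boldsymbol\kappa$, $\|\boldsymbol\kappa\|_1=\sum_j\sum_{\ell\in\kappa_j}\ell$, $\|\boldsymbol\kappa\|_0=\sum_j|\kappa_j|$; $\mathbb N_*^s=\mathbb N_0^s\setminus\{\boldsymbol0\}$, $Q_N=\{\boldsymbol k\in\mathbb N_*^s:\|\boldsymbol\kappa\|_1\le N\}$; $\hat f(\boldsymbol k)=\int f(\boldsymbol x)(-1)^{\sum_j\vec k_j^{\mathsf T}\vec x_j}\mathrm d\boldsymbol x$; $f^{|\boldsymbol\kappa|}=\partial^{\|\boldsymbol\kappa\|_0}f/\partial x_1^{|\kappa_1|}\cdots\partial x_s^{|\kappa_s|}$; $\|\cdot\|_1$ the $L^1$ norm. $\oplus$ is componentwise bitwise XOR on $\mathbb N_0^s$; $\lambda=3(\log2)^2/\pi^2$. Constants: $A_s,B_s>0$ depend only on $s$ and satisfy: for all $N\ge1$, $r\ge2$, if $\boldsymbol k_1,\dots,\boldsymbol k_r$ are i.i.d. uniform on $Q_N$ then $\Pr(\oplus_i\boldsymbol k_i\in Q_N)\le A_s^rN^{r/4}r^{-B_s\sqrt N}$. $c_s=\frac14B_s\sqrt{\lambda/s}$, $N_m=\sup\{N\in\mathbb N_0:|Q_N|\le c_sm2^m\}$.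 $Z(\boldsymbol k)\in\{0,1\}$ and $S(\boldsymbol k)\in\{-1,1\}$ are the random variables $Z(\boldsymbol k)=\mathbf 1\{\sum_j\sum_{\ell\in\kappa_j}C_j(\ell,:)=\boldsymbol0\bmod2\}$, $S(\boldsymbol k)=(-1)^{\sum_j\vec k_j^{\mathsf T}\vec D_j}$ attached to random generating matrices $C_j\in\{0,1\}^{\infty\times m}$ and digital shifts $\vec D_j\in\{0,1\}^\infty$ of a randomized base-2 digital net with $2^m$ points. *)

theory Defs
  imports "HOL-Analysis.Analysis"
begin

text \<open>Digit set of k: kappa k = {l >= 1. the l-th binary digit a_l of k is 1},
  where k = sum_{l>=1} a_l 2^(l-1).\<close>
definition kappa :: "nat \<Rightarrow> nat set" where
  "kappa k = {l. 1 \<le> l \<and> bit k (l - 1)}"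

definition xdig :: "real \<Rightarrow> nat \<Rightarrow> nat" where
  "xdig x l = nat \<lfloor>2 ^ l * x\<rfloor> mod 2"

text \<open>Multi-indices in N_0^s are functions nat => nat vanishing outside {..<s}.\<close>
definition idx :: "nat \<Rightarrow> (nat \<Rightarrow> nat) set" where
  "idx s = {k. \<forall>j\<ge>s. k j = 0}"

definition Nstar :: "nat \<Rightarrow> (nat \<Rightarrow> nat) set" where
  "Nstar s = {k \<in> idx s. \<exists>j<s. k j \<noteq> 0}"

definition norm1 :: "nat \<Rightarrow> (nat \<Rightarrow> nat) \<Rightarrow> nat" where
  "norm1 s k = (\<Sum>j<s. \<Sum>l\<in>kappa (k j). l)"

definition norm0 :: "nat \<Rightarrow> (nat \<Rightarrow> nat) \<Rightarrow> nat" where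
  "norm0 s k = (\<Sum>j<s. card (kappa (k j)))"

definition Q :: "nat \<Rightarrow> nat \<Rightarrow> (nat \<Rightarrow> nat) set" where
  "Q s N = {k \<in> Nstar s. norm1 s k \<le> N}"

fun xor_all :: "(nat \<Rightarrow> nat \<Rightarrow> nat) \<Rightarrow> nat \<Rightarrow> nat \<Rightarrow> nat" where
  "xor_all t 0 = (\<lambda>j. 0)"
| "xor_all t (Suc i) = (\<lambda>j. xor (xor_all t i j) (t i j))"

text \<open>Pr(xor of r i.i.d. uniform elements of Q_N lies in Q_N).\<close>
definition xor_prob :: "nat \<Rightarrow> nat \<Rightarrow> nat \<Rightarrow> real" where
  "xor_prob s N r =
     real (card {t \<in> PiE {..<r} (\<lambda>_. Q s N). xor_all t r \<in> Q s N})
     / real (card (Q s N)) ^ r"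

definition AB_ok :: "nat \<Rightarrow> real \<Rightarrow> real \<Rightarrow> bool" where
  "AB_ok s A B \<longleftrightarrow> A > 0 \<and> B > 0 \<and>
     (\<forall>N r. N \<ge> 1 \<longrightarrow> r \<ge> 2 \<longrightarrow>
        xor_prob s N r \<le> A ^ r * real N powr (real r / 4) * real r powr (- B * sqrt (real N)))"

definition lam :: real where
  "lam = 3 * (ln 2)^2 / pi^2"

definition c_s :: "nat \<Rightarrow> real \<Rightarrow> real" where
  "c_s s B = 1/4 * B * sqrt (lam / real s)"

definition Nm :: "nat \<Rightarrow> real \<Rightarrow> nat \<Rightarrow> nat" where
  "Nm s B m = Sup {N. real (card (Q s N)) \<le> c_s s B * real m * 2 ^ m}"

text \<open>Points of [0,1]^s are extensional functions on {..<s}.\<close>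
definition cube :: "nat \<Rightarrow> (nat \<Rightarrow> real) set" where
  "cube s = PiE {..<s} (\<lambda>_. {0..1})"

definition cube_measure :: "nat \<Rightarrow> (nat \<Rightarrow> real) measure" where
  "cube_measure s = PiM {..<s} (\<lambda>_. restrict_space lborel {0..1})"

definition walsh :: "nat \<Rightarrow> (nat \<Rightarrow> nat) \<Rightarrow> (nat \<Rightarrow> real) \<Rightarrow> real" where
  "walsh s k x = (-1) ^ (\<Sum>j<s. \<Sum>l\<in>kappa (k j). xdig (x j) l)"

definition fhat :: "nat \<Rightarrow> ((nat \<Rightarrow> real) \<Rightarrow> real) \<Rightarrow> (nat \<Rightarrow> nat) \<Rightarrow> real" where
  "fhat s f k = (\<integral>x. f x * walsh s k x \<partial>cube_measure s)"

definition L1norm :: "nat \<Rightarrow> ((nat \<Rightarrow> real) \<Rightarrow> real) \<Rightarrow> real" where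
  "L1norm s g = (\<integral>x. \<bar>g x\<bar> \<partial>cube_measure s)"

text \<open>Partial derivative in coordinate j (one-sided at the boundary of [0,1]).\<close>
definition partial :: "nat \<Rightarrow> ((nat \<Rightarrow> real) \<Rightarrow> real) \<Rightarrow> (nat \<Rightarrow> real) \<Rightarrow> real" where
  "partial j g x = vector_derivative (\<lambda>t. g (x(j := t))) (at (x j) within {0..1})"

fun iter_partial :: "nat list \<Rightarrow> ((nat \<Rightarrow> real) \<Rightarrow> real) \<Rightarrow> (nat \<Rightarrow> real) \<Rightarrow> real" where
  "iter_partial [] g = g"
| "iter_partial (j # js) g = partial j (iter_partial js g)"

definition smooth_cube :: "nat \<Rightarrow> ((nat \<Rightarrow> real) \<Rightarrow> real) \<Rightarrow> bool" where
  "smooth_cube s f \<longleftrightarrow>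
     (\<forall>js. set js \<subseteq> {..<s} \<longrightarrow>
        continuous_on (cube s) (iter_partial js f) \<and>
        (\<forall>j<s. \<forall>x\<in>cube s.
           (\<lambda>t. iter_partial js f (x(j := t))) differentiable (at (x j) within {0..1})))"

text \<open>f^{|kappa|}: derivative of order |kappa_j| in coordinate j.\<close>
definition mixed_deriv :: "nat \<Rightarrow> (nat \<Rightarrow> nat) \<Rightarrow> ((nat \<Rightarrow> real) \<Rightarrow> real) \<Rightarrow> (nat \<Rightarrow> real) \<Rightarrow> real" where
  "mixed_deriv s k f =
     iter_partial (concat (map (\<lambda>j. replicate (card (kappa (k j))) j) [0..<s])) f"

text \<open>C j l c: entry (row l >= 1, column c < m) of generating matrix C_j;
  D j l: l-th digit of the shift D_j.\<close>
definition Zk :: "nat \<Rightarrow> nat \<Rightarrow> (nat \<Rightarrow> nat \<Rightarrow> nat \<Rightarrow> bool) \<Rightarrow> (nat \<Rightarrow> nat) \<Rightarrow> real" where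
  "Zk s m C k = (if \<forall>c<m. even (card {(j, l). j < s \<and> l \<in> kappa (k j) \<and> C j l c})
                 then 1 else 0)"

definition Sk :: "nat \<Rightarrow> (nat \<Rightarrow> nat \<Rightarrow> bool) \<Rightarrow> (nat \<Rightarrow> nat) \<Rightarrow> real" where
  "Sk s D k = (-1) ^ card {(j, l). j < s \<and> l \<in> kappa (k j) \<and> D j l}"

end

theory Submission
  imports Defs "HOL-Probability.Probability"
begin

lemma kappa_subset: "kappa n \<subseteq> {1..n}"
proof
  fix l assume "l \<in> kappa n"
  then have l: "1 \<le> l" "bit n (l - 1)" by (auto simp: kappa_def)
  have "l - 1 < 2 ^ (l - 1)" by simp
  moreover have "\<not> n < 2 ^ (l - 1)" using l(2) by (auto simp: bit_iff_odd)
  ultimately have "l - 1 < n" by linarith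
  then show "l \<in> {1..n}" using l(1) by auto
qed

lemma finite_kappa[simp]: "finite (kappa n)"
  using kappa_subset finite_subset by blast

lemma kappa_0[simp]: "kappa 0 = {}"
  by (auto simp: kappa_def)

lemma kappa_pos: "l \<in> kappa n \<Longrightarrow> 1 \<le> l"
  by (auto simp: kappa_def)

lemma kappa_rec: "kappa n = (if odd n then {1} else {}) \<union> Suc ` kappa (n div 2)"
proof -
  have "l \<in> kappa n \<longleftrightarrow> l \<in> (if odd n then {1} else {}) \<union> Suc ` kappa (n div 2)" for l
  proof (cases l)
    case 0 then show ?thesis by (auto simp: kappa_def)
  next
    case (Suc l') note L = Suc
    show ?thesis
    proof (cases l')
      case 0 then show ?thesis using L by (auto simp: kappa_def bit_0)
    next
      case (Suc l'')
      have "bit n l' = bit (n div 2) l''" using Suc by (simp add: bit_Suc)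
      then show ?thesis using L Suc by (auto simp: kappa_def image_iff)
    qed
  qed
  then show ?thesis by blast
qed

lemma one_notin_Suc_kappa: "1 \<notin> Suc ` kappa q"
  using kappa_pos by fastforce

lemma card_kappa_rec: "card (kappa n) = n mod 2 + card (kappa (n div 2))"
proof -
  let ?A = "(if odd n then {1} else {}) :: nat set"
  have "card (kappa n) = card (?A \<union> Suc ` kappa (n div 2))"
    using kappa_rec by metis
  also have "\<dots> = card ?A + card (Suc ` kappa (n div 2))"
    by (rule card_Un_disjoint) (auto simp: one_notin_Suc_kappa dest: kappa_pos)
  finally show ?thesis by (auto simp: card_image odd_iff_mod_2_eq_one)
qed

lemma sum_kappa_rec: "(\<Sum>l\<in>kappa n. l) = n mod 2 + (\<Sum>l\<in>kappa (n div 2). l) + card (kappa (n div 2))"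
proof -
  let ?A = "(if odd n then {1} else {}) :: nat set"
  have "(\<Sum>l\<in>kappa n. l) = (\<Sum>l\<in>?A \<union> Suc ` kappa (n div 2). l)"
    using kappa_rec by metis
  also have "\<dots> = (\<Sum>l\<in>?A. l) + (\<Sum>l\<in>Suc ` kappa (n div 2). l)"
    by (rule sum.union_disjoint) (auto simp: one_notin_Suc_kappa dest: kappa_pos)
  also have "(\<Sum>l\<in>Suc ` kappa (n div 2). l) = (\<Sum>l\<in>kappa (n div 2). Suc l)"
    by (simp add: sum.reindex)
  also have "(\<Sum>l\<in>kappa (n div 2). Suc l) = (\<Sum>l\<in>kappa (n div 2). l) + card (kappa (n div 2))"
  proof -
    have "(\<Sum>l\<in>kappa (n div 2). Suc l) = (\<Sum>l\<in>kappa (n div 2). l + 1)" by simp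
    also have "\<dots> = (\<Sum>l\<in>kappa (n div 2). l) + (\<Sum>l\<in>kappa (n div 2). 1)" by (rule sum.distrib)
    finally show ?thesis by simp
  qed
  finally show ?thesis by (auto simp: odd_iff_mod_2_eq_one)
qed

lemma xdig_half: "xdig (y/2) (Suc l) = xdig y l"
proof -
  have "(2::real) ^ Suc l * (y / 2) = 2 ^ l * y" by simp
  then show ?thesis unfolding xdig_def by presburger
qed


lemma xdig_half1: "0 \<le> y \<Longrightarrow> 1 \<le> l \<Longrightarrow> xdig ((1+y)/2) (Suc l) = xdig y l"
proof -
  assume y: "0 \<le> y" and l: "1 \<le> l"
  have "(2::real) ^ Suc l * ((1 + y) / 2) = of_int (2 ^ l) + 2 ^ l * y" by (simp add: field_simps)
  then have "\<lfloor>(2::real) ^ Suc l * ((1 + y) / 2)\<rfloor> = 2 ^ l + \<lfloor>(2::real) ^ l * y\<rfloor>"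
    by (simp only: floor_add_int) simp
  moreover have "\<lfloor>(2::real) ^ l * y\<rfloor> \<ge> 0" using y by simp
  ultimately have e: "nat \<lfloor>(2::real) ^ Suc l * ((1 + y) / 2)\<rfloor> = 2 ^ l + nat \<lfloor>(2::real) ^ l * y\<rfloor>"
    by (simp add: nat_add_distrib nat_power_eq)
  have ev: "(2::nat) ^ l mod 2 = 0" using l by (cases l) auto
  show ?thesis unfolding xdig_def e using ev by (simp add: mod_add_eq[symmetric])
qed

lemma xdig_half_1: "0 \<le> y \<Longrightarrow> y < 1 \<Longrightarrow> xdig (y/2) 1 = 0"
  by (simp add: xdig_def floor_eq_iff)

lemma xdig_half1_1: "0 \<le> y \<Longrightarrow> y < 1 \<Longrightarrow> xdig ((1+y)/2) 1 = 1"
proof -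
  assume "0 \<le> y" "y < 1"
  then have "\<lfloor>(2::real) ^ 1 * ((1 + y) / 2)\<rfloor> = 1" by (simp add: floor_eq_iff)
  then show ?thesis unfolding xdig_def by simp
qed

lemma sum_kappa_split:
  "(\<Sum>l\<in>kappa n. g l) = (if odd n then g 1 else 0) + (\<Sum>l\<in>kappa (n div 2). g (Suc l))"
proof -
  let ?A = "(if odd n then {1} else {}) :: nat set"
  have "(\<Sum>l\<in>kappa n. g l) = (\<Sum>l\<in>?A \<union> Suc ` kappa (n div 2). g l)"
    using kappa_rec by metis
  also have "\<dots> = (\<Sum>l\<in>?A. g l) + (\<Sum>l\<in>Suc ` kappa (n div 2). g l)"
    by (rule sum.union_disjoint) (auto simp: one_notin_Suc_kappa dest: kappa_pos)
  also have "(\<Sum>l\<in>Suc ` kappa (n div 2). g l) = (\<Sum>l\<in>kappa (n div 2). g (Suc l))"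
    by (simp add: sum.reindex)
  finally show ?thesis by auto
qed

lemma xdig_half': "1 \<le> l \<Longrightarrow> xdig (y/2) (Suc l) = xdig y l"
  by (rule xdig_half)

lemma sum_xdig_half0:
  assumes "0 \<le> y" "y < 1"
  shows "(\<Sum>l\<in>kappa n. xdig (y/2) l) = (\<Sum>l\<in>kappa (n div 2). xdig y l)"
proof -
  have h1: "xdig (y/2) 1 = 0" using xdig_half_1 assms by blast
  have "(\<Sum>l\<in>kappa (n div 2). xdig (y/2) (Suc l)) = (\<Sum>l\<in>kappa (n div 2). xdig y l)"
  proof (rule sum.cong[OF refl])
    fix l assume "l \<in> kappa (n div 2)"
    then show "xdig (y/2) (Suc l) = xdig y l" using kappa_pos xdig_half' by blast
  qed
  then show ?thesis using sum_kappa_split[where n=n and g="\<lambda>l. xdig (y/2) l"] h1 by simp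
qed

lemma sum_xdig_half1:
  assumes "0 \<le> y" "y < 1"
  shows "(\<Sum>l\<in>kappa n. xdig ((1+y)/2) l) = n mod 2 + (\<Sum>l\<in>kappa (n div 2). xdig y l)"
proof -
  have h1: "xdig ((1+y)/2) 1 = 1" using xdig_half1_1 assms by blast
  have "(\<Sum>l\<in>kappa (n div 2). xdig ((1+y)/2) (Suc l)) = (\<Sum>l\<in>kappa (n div 2). xdig y l)"
  proof (rule sum.cong[OF refl])
    fix l assume "l \<in> kappa (n div 2)"
    then show "xdig ((1+y)/2) (Suc l) = xdig y l" using kappa_pos xdig_half1 assms by blast
  qed
  then show ?thesis using sum_kappa_split[where n=n and g="\<lambda>l. xdig ((1+y)/2) l"] h1
    by (simp add: odd_iff_mod_2_eq_one even_iff_mod_2_eq_zero)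
qed

lemma sum_split_j:
  assumes "j < (s::nat)"
  shows "(\<Sum>i<s. g i) = g j + (\<Sum>i\<in>{..<s}-{j}. g i)"
  using assms by (intro sum.remove) auto

lemma walsh_half0:
  assumes "j < s" "0 \<le> x j" "x j < 1"
  shows "walsh s k (x(j := x j / 2)) = walsh s (k(j := k j div 2)) x"
proof -
  have "(\<Sum>i<s. \<Sum>l\<in>kappa (k i). xdig ((x(j := x j / 2)) i) l)
      = (\<Sum>i<s. \<Sum>l\<in>kappa ((k(j := k j div 2)) i). xdig (x i) l)"
  proof (rule sum.cong[OF refl])
    fix i assume "i \<in> {..<s}"
    show "(\<Sum>l\<in>kappa (k i). xdig ((x(j := x j / 2)) i) l) = (\<Sum>l\<in>kappa ((k(j := k j div 2)) i). xdig (x i) l)"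
      using assms by (cases "i = j") (simp_all add: sum_xdig_half0)
  qed
  then show ?thesis unfolding walsh_def by simp
qed

lemma walsh_half1:
  assumes "j < s" "0 \<le> x j" "x j < 1"
  shows "walsh s k (x(j := (1 + x j) / 2)) = (-1) ^ (k j mod 2) * walsh s (k(j := k j div 2)) x"
proof -
  have "(\<Sum>i<s. \<Sum>l\<in>kappa (k i). xdig ((x(j := (1 + x j) / 2)) i) l)
      = (\<Sum>l\<in>kappa (k j). xdig ((1 + x j) / 2) l) + (\<Sum>i\<in>{..<s}-{j}. \<Sum>l\<in>kappa (k i). xdig (x i) l)"
    using assms by (subst sum_split_j[OF assms(1)]) (auto intro!: sum.cong[OF refl])
  also have "\<dots> = k j mod 2 + ((\<Sum>l\<in>kappa (k j div 2). xdig (x j) l) + (\<Sum>i\<in>{..<s}-{j}. \<Sum>l\<in>kappa (k i). xdig (x i) l))"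
    using assms by (simp add: sum_xdig_half1)
  also have "(\<Sum>l\<in>kappa (k j div 2). xdig (x j) l) + (\<Sum>i\<in>{..<s}-{j}. \<Sum>l\<in>kappa (k i). xdig (x i) l)
      = (\<Sum>i<s. \<Sum>l\<in>kappa ((k(j := k j div 2)) i). xdig (x i) l)"
    using assms by (subst sum_split_j[OF assms(1)]) (auto intro!: sum.cong[OF refl])
  finally show ?thesis unfolding walsh_def by (simp add: power_add)
qed

lemma norm1_half:
  assumes "j < s"
  shows "norm1 s k = norm1 s (k(j := k j div 2)) + card (kappa (k j))"
proof -
  have "norm1 s k = (\<Sum>l\<in>kappa (k j). l) + (\<Sum>i\<in>{..<s}-{j}. \<Sum>l\<in>kappa (k i). l)"
    unfolding norm1_def by (rule sum_split_j[OF assms])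
  moreover have "norm1 s (k(j := k j div 2)) = (\<Sum>l\<in>kappa (k j div 2). l) + (\<Sum>i\<in>{..<s}-{j}. \<Sum>l\<in>kappa (k i). l)"
    unfolding norm1_def by (subst sum_split_j[OF assms]) (auto intro!: sum.cong[OF refl])
  ultimately show ?thesis using sum_kappa_rec[of "k j"] card_kappa_rec[of "k j"] by simp
qed

abbreviation M1 :: "real measure" where "M1 \<equiv> restrict_space lborel {0..1}"

lemma M1_prob: "prob_space M1"
  by (rule prob_space_restrict_space) auto

lemma cube_prob: "prob_space (cube_measure s)"
  unfolding cube_measure_def by (rule prob_space_PiM) (rule M1_prob)

lemma psf: "product_sigma_finite (\<lambda>_. M1)"
  unfolding product_sigma_finite_def
  using M1_prob prob_space_imp_subprob_space subprob_space_imp_sigma_finite by blast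

lemma space_cube: "space (cube_measure s) = cube s"
  by (simp add: cube_measure_def cube_def space_PiM space_restrict_space)

lemma cube_PiE: "cube s = PiE UNIV (\<lambda>i. if i < s then {0..1} else {undefined})"
proof (rule set_eqI, rule iffI)
  fix x assume "x \<in> cube s"
  then have a: "\<And>i. i < s \<Longrightarrow> x i \<in> {0..1}" "\<And>i. \<not> i < s \<Longrightarrow> x i = undefined"
    unfolding cube_def by (auto simp: PiE_iff extensional_def)
  have "x i \<in> (if i < s then {0..1} else {undefined})" for i
    using a[of i] by (cases "i < s") simp_all
  then show "x \<in> PiE UNIV (\<lambda>i. if i < s then {0..1} else {undefined})"
    by (simp add: PiE_UNIV_domain Pi_iff)
next
  fix x assume "x \<in> PiE UNIV (\<lambda>i. if i < s then {0..1::real} else {undefined})"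
  then have a: "x i \<in> (if i < s then {0..1} else {undefined})" for i
    by (simp add: PiE_UNIV_domain Pi_iff)
  have "\<And>i. i < s \<Longrightarrow> x i \<in> {0..1}"
    using a by (metis (full_types))
  moreover have "\<And>i. \<not> i < s \<Longrightarrow> x i = undefined"
  proof -
    fix i assume "\<not> i < s" with a[of i] show "x i = undefined" by simp
  qed
  ultimately show "x \<in> cube s" unfolding cube_def by (auto simp: PiE_iff extensional_def)
qed

lemma compact_cube: "compact (cube s)"
proof -
  have "compactin (product_topology (\<lambda>i. euclidean) UNIV) (PiE UNIV (\<lambda>i. if i < s then {0..1::real} else {undefined}))"
    by (subst compactin_PiE) auto
  then show ?thesis unfolding cube_PiE euclidean_product_topology by simp
qed

lemma closed_cube: "closed (cube s)"
  using compact_cube compact_imp_closed by blast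

lemma component_meas: "(\<lambda>x. x i) \<in> borel_measurable (cube_measure s)"
proof (cases "i < s")
  case True
  have h1: "(\<lambda>x. x i) \<in> measurable (cube_measure s) M1"
    unfolding cube_measure_def using True by (simp add: measurable_component_singleton)
  have h2: "(\<lambda>y. y) \<in> measurable M1 (borel :: real measure)"
    by (rule measurable_restrict_space1) simp
  from measurable_comp[OF h1 h2] show ?thesis by (simp add: comp_def)
next
  case False
  have eq: "\<And>x. x \<in> space (cube_measure s) \<Longrightarrow> x i = undefined"
    using False by (auto simp: space_cube cube_def PiE_iff extensional_def)
  have c: "(\<lambda>x. undefined::real) \<in> borel_measurable (cube_measure s)" by simp
  have "(\<lambda>x. x i) \<in> borel_measurable (cube_measure s) \<longleftrightarrow> (\<lambda>x. undefined::real) \<in> borel_measurable (cube_measure s)"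
    by (rule measurable_cong) (rule eq)
  then show ?thesis using c by blast
qed

lemma id_meas: "(\<lambda>x. x) \<in> borel_measurable (cube_measure s)"
  by (rule measurable_coordinatewise_then_product) (rule component_meas)

lemma cont_meas:
  assumes "continuous_on (cube s) g"
  shows "(g :: _ \<Rightarrow> real) \<in> borel_measurable (cube_measure s)"
proof -
  have "(\<lambda>x. indicator (cube s) x *\<^sub>R g x) \<in> borel_measurable borel"
    using closed_cube assms by (intro borel_measurable_continuous_on_indicator) auto
  then have "(\<lambda>x. indicator (cube s) x *\<^sub>R g x) \<in> borel_measurable (cube_measure s)"
    using measurable_comp[OF id_meas] by (simp add: comp_def)
  moreover have eq: "\<And>x. x \<in> space (cube_measure s) \<Longrightarrow> indicator (cube s) x *\<^sub>R g x = g x"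
    by (simp add: space_cube)
  moreover have "(\<lambda>x. indicator (cube s) x *\<^sub>R g x) \<in> borel_measurable (cube_measure s) \<longleftrightarrow> g \<in> borel_measurable (cube_measure s)"
    by (rule measurable_cong) (rule eq)
  ultimately show ?thesis by blast
qed

lemma cont_bounded:
  assumes "continuous_on (cube s) g"
  obtains B where "\<And>x. x \<in> cube s \<Longrightarrow> \<bar>(g x :: real)\<bar> \<le> B"
proof -
  have "compact (g ` cube s)" using compact_cube assms compact_continuous_image by blast
  then have "bounded (g ` cube s)" by (rule compact_imp_bounded)
  then obtain B where "\<And>y. y \<in> g ` cube s \<Longrightarrow> norm y \<le> B" by (auto simp: bounded_iff)
  then show ?thesis using that by force
qed

lemma integrable_bounded:
  assumes "g \<in> borel_measurable (cube_measure s)" "\<And>x. x \<in> cube s \<Longrightarrow> \<bar>(g x :: real)\<bar> \<le> B"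
  shows "integrable (cube_measure s) g"
proof -
  interpret prob_space "cube_measure s" by (rule cube_prob)
  show ?thesis
    by (rule integrable_const_bound[where B=B]) (use assms in \<open>auto simp: space_cube\<close>)
qed

lemma cont_integrable:
  assumes "continuous_on (cube s) g"
  shows "integrable (cube_measure s) (g :: _ \<Rightarrow> real)"
  using cont_bounded[OF assms] integrable_bounded[OF cont_meas[OF assms]] by metis

lemma walsh_prod: "walsh s k x = (\<Prod>i<s. \<Prod>l\<in>kappa (k i). (-1::real) ^ xdig (x i) l)"
  unfolding walsh_def by (simp add: power_sum)

lemma walsh_meas: "walsh s k \<in> borel_measurable (cube_measure s)"
proof -
  have f: "(\<lambda>t::real. (-1::real) ^ xdig t l) \<in> borel_measurable borel" for l
    unfolding xdig_def by measurable
  have "(\<lambda>x. (\<Prod>i<s. \<Prod>l\<in>kappa (k i). (-1::real) ^ xdig (x i) l)) \<in> borel_measurable (cube_measure s)"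
    by (intro borel_measurable_prod measurable_comp[OF component_meas f, unfolded comp_def])
  then show ?thesis by (simp add: walsh_prod[abs_def])
qed

lemma walsh_abs: "\<bar>walsh s k x\<bar> = 1"
  unfolding walsh_def by simp

lemma M1_restrict_eq: "(\<integral>\<^sup>+y. f y \<partial>M1) = (\<integral>\<^sup>+y. f y * indicator {0..1} y \<partial>lborel)"
  by (rule nn_integral_restrict_space) simp

lemma half_split_nn:
  fixes h :: "real \<Rightarrow> ennreal"
  assumes h: "h \<in> borel_measurable M1"
  shows "(\<integral>\<^sup>+y. h y \<partial>M1) = ennreal (1/2) * (\<integral>\<^sup>+y. h (y/2) \<partial>M1) + ennreal (1/2) * (\<integral>\<^sup>+y. h ((1+y)/2) \<partial>M1)"
proof -
  define H where "H y = (if y \<in> {0..1} then h y else 0)" for y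
  have "(\<lambda>y. if y \<in> {0..1} then h y else 0) \<in> borel_measurable lborel"
    using h by (subst (asm) measurable_restrict_space_iff) auto
  then have Hm[measurable]: "H \<in> borel_measurable borel"
    unfolding H_def[abs_def] by simp
  have "(\<integral>\<^sup>+y. h y \<partial>M1) = (\<integral>\<^sup>+y. H y \<partial>lborel)"
    unfolding M1_restrict_eq by (rule nn_integral_cong) (simp add: H_def)
  also have "\<dots> = (\<integral>\<^sup>+y. H y * indicator {0..<1/2} y + H y * indicator {1/2..1} y \<partial>lborel)"
    by (rule nn_integral_cong) (auto simp: H_def indicator_def)
  also have "\<dots> = (\<integral>\<^sup>+y. H y * indicator {0..<1/2} y \<partial>lborel) + (\<integral>\<^sup>+y. H y * indicator {1/2..1} y \<partial>lborel)"
    by (rule nn_integral_add) auto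
  also have "(\<integral>\<^sup>+y. H y * indicator {0..<1/2} y \<partial>lborel)
      = ennreal \<bar>1/2\<bar> * (\<integral>\<^sup>+y. H (0 + 1/2 * y) * indicator {0..<1/2} (0 + 1/2 * y) \<partial>lborel)"
    by (rule nn_integral_real_affine) auto
  also have "(\<integral>\<^sup>+y. H (0 + 1/2 * y) * indicator {0..<1/2} (0 + 1/2 * y) \<partial>lborel)
      = (\<integral>\<^sup>+y. h (y/2) * indicator {0..1} y \<partial>lborel)"
  proof (rule nn_integral_cong_AE)
    show "AE y in lborel. H (0 + 1/2 * y) * indicator {0..<1/2} (0 + 1/2 * y) = h (y/2) * indicator {0..1} y"
      using AE_lborel_singleton[of 1]
      by eventually_elim (auto simp: H_def indicator_def)
  qed
  also have "(\<integral>\<^sup>+y. H y * indicator {1/2..1} y \<partial>lborel)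
      = ennreal \<bar>1/2\<bar> * (\<integral>\<^sup>+y. H (1/2 + 1/2 * y) * indicator {1/2..1} (1/2 + 1/2 * y) \<partial>lborel)"
    by (rule nn_integral_real_affine) auto
  also have "(\<integral>\<^sup>+y. H (1/2 + 1/2 * y) * indicator {1/2..1} (1/2 + 1/2 * y) \<partial>lborel)
      = (\<integral>\<^sup>+y. h ((1+y)/2) * indicator {0..1} y \<partial>lborel)"
    by (rule nn_integral_cong) (auto simp: H_def indicator_def add_divide_distrib)
  finally show ?thesis unfolding M1_restrict_eq by simp
qed

interpretation PS: product_sigma_finite "\<lambda>_::nat. M1" by (rule psf)

lemma M1sf: "sigma_finite_measure M1"
  by (rule M1_prob[THEN prob_space_imp_subprob_space, THEN subprob_space_imp_sigma_finite])

lemma cube_insert: "j < s \<Longrightarrow> insert j ({..<s} - {j}) = {..<s}"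
  by auto

lemma inner_meas:
  fixes G :: "(nat \<Rightarrow> real) \<Rightarrow> ennreal"
  assumes "G \<in> borel_measurable (PiM (insert j I) (\<lambda>_. M1))"
  shows "(\<lambda>x. \<integral>\<^sup>+y. G (x(j := y)) \<partial>M1) \<in> borel_measurable (PiM I (\<lambda>_. M1))"
proof -
  have "(\<lambda>p. (fst p)(j := snd p)) \<in> measurable (PiM I (\<lambda>_. M1) \<Otimes>\<^sub>M M1) (PiM (insert j I) (\<lambda>_. M1))"
    by (rule measurable_fun_upd[where J=I]) auto
  from measurable_comp[OF this assms]
  have "case_prod (\<lambda>x y. G (x(j := y))) \<in> borel_measurable (PiM I (\<lambda>_. M1) \<Otimes>\<^sub>M M1)"
    by (simp add: comp_def case_prod_beta)
  then show ?thesis by (rule sigma_finite_measure.borel_measurable_nn_integral[OF M1sf])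
qed

definition phi :: "nat \<Rightarrow> real \<Rightarrow> (nat \<Rightarrow> real) \<Rightarrow> (nat \<Rightarrow> real)" where
  "phi j c x = x(j := (c + x j) / 2)"

lemma cube_comp:
  assumes "x \<in> cube s" "i < s"
  shows "x i \<in> {0..1}"
proof -
  have "i \<in> {..<s}" using assms(2) by simp
  from PiE_mem[OF assms(1)[unfolded cube_def] this] show ?thesis .
qed

lemma phi_cube:
  assumes "j < s" "0 \<le> c" "c \<le> 1" "x \<in> cube s"
  shows "phi j c x \<in> cube s"
proof -
  have "x j \<in> {0..1}" using cube_comp assms(1,4) by blast
  then have "(c + x j) / 2 \<in> {0..1}" using assms(2,3) by auto
  from PiE_fun_upd[where f=x and S="{..<s}" and T="\<lambda>_. {0..1}", OF this] assms(4)
  have "x(j := (c + x j) / 2) \<in> PiE (insert j {..<s}) (\<lambda>_. {0..1})" by (simp add: cube_def)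
  moreover have "insert j {..<s} = {..<s}" using assms(1) by auto
  ultimately show ?thesis by (simp add: phi_def cube_def)
qed

lemma phi_meas:
  assumes "j < s" "0 \<le> c" "c \<le> 1"
  shows "phi j c \<in> measurable (cube_measure s) (cube_measure s)"
  unfolding cube_measure_def
proof (rule measurable_PiM_single')
  fix i assume i: "i \<in> {..<s}"
  show "(\<lambda>x. phi j c x i) \<in> measurable (PiM {..<s} (\<lambda>_. M1)) M1"
  proof (cases "i = j")
    case True
    have m: "(\<lambda>x. (c + x j) / 2) \<in> borel_measurable (PiM {..<s} (\<lambda>_. M1))"
      using component_meas[of j s] unfolding cube_measure_def by measurable
    have "(\<lambda>x. (c + x j) / 2) \<in> measurable (PiM {..<s} (\<lambda>_. M1)) M1"
    proof (rule measurable_restrict_space2)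
      show "(\<lambda>x. (c + x j) / 2) \<in> space (PiM {..<s} (\<lambda>_. M1)) \<rightarrow> {0..1}"
      proof
        fix x assume "x \<in> space (PiM {..<s} (\<lambda>_. M1))"
        then have "x \<in> PiE {..<s} (\<lambda>_. space M1)" by (simp only: space_PiM)
        moreover have "j \<in> {..<s}" using assms(1) by simp
        ultimately have "x j \<in> space M1" by (rule PiE_mem)
        then have "x j \<in> {0..1}" by (simp add: space_restrict_space)
        then show "(c + x j) / 2 \<in> {0..1}" using assms by auto
      qed
      show "(\<lambda>x. (c + x j) / 2) \<in> measurable (PiM {..<s} (\<lambda>_. M1)) lborel"
        using m by simp
    qed
    then show ?thesis using True by (simp add: phi_def)
  next
    case False
    then show ?thesis using i by (simp add: phi_def measurable_component_singleton)
  qed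
next
  show "phi j c \<in> space (PiM {..<s} (\<lambda>_. M1)) \<rightarrow> (\<Pi>\<^sub>E i\<in>{..<s}. space M1)"
    using phi_cube[OF assms] space_cube[of s] unfolding cube_measure_def
    by (auto simp: space_PiM space_restrict_space cube_def)
qed

lemma F1nn:
  fixes g :: "(nat \<Rightarrow> real) \<Rightarrow> ennreal"
  assumes j: "j < s" and g: "g \<in> borel_measurable (cube_measure s)"
  shows "(\<integral>\<^sup>+x. g x \<partial>cube_measure s) =
    ennreal (1/2) * (\<integral>\<^sup>+x. g (phi j 0 x) \<partial>cube_measure s) + ennreal (1/2) * (\<integral>\<^sup>+x. g (phi j 1 x) \<partial>cube_measure s)"
proof -
  let ?I = "{..<s} - {j}"
  let ?P = "PiM ?I (\<lambda>_. M1)"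
  have C: "cube_measure s = PiM (insert j ?I) (\<lambda>_. M1)"
    unfolding cube_measure_def cube_insert[OF j] ..
  have g': "g \<in> borel_measurable (PiM (insert j ?I) (\<lambda>_. M1))" using g C by simp
  have g0: "(\<lambda>x. g (phi j 0 x)) \<in> borel_measurable (PiM (insert j ?I) (\<lambda>_. M1))"
    using measurable_comp[OF phi_meas[OF j, of 0] g] C by (simp add: comp_def)
  have g1: "(\<lambda>x. g (phi j 1 x)) \<in> borel_measurable (PiM (insert j ?I) (\<lambda>_. M1))"
    using measurable_comp[OF phi_meas[OF j, of 1] g] C by (simp add: comp_def)
  have pj: "phi j c (x(j := y)) = x(j := (c + y) / 2)" for c x y
    by (simp add: phi_def)
  have "(\<integral>\<^sup>+x. g x \<partial>cube_measure s) = (\<integral>\<^sup>+x. (\<integral>\<^sup>+y. g (x(j := y)) \<partial>M1) \<partial>?P)"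
    unfolding C by (rule PS.product_nn_integral_insert) (use g' in auto)
  also have "\<dots> = (\<integral>\<^sup>+x. ennreal (1/2) * (\<integral>\<^sup>+y. g (x(j := (0 + y)/2)) \<partial>M1)
                 + ennreal (1/2) * (\<integral>\<^sup>+y. g (x(j := (1 + y)/2)) \<partial>M1) \<partial>?P)"
  proof (rule nn_integral_cong)
    fix x assume x: "x \<in> space ?P"
    have "(\<lambda>y. g (x(j := y))) \<in> borel_measurable M1"
      using measurable_comp[OF measurable_component_update[OF x, of j] g'] by (simp add: comp_def)
    from half_split_nn[OF this] show "(\<integral>\<^sup>+y. g (x(j := y)) \<partial>M1) = ennreal (1/2) * (\<integral>\<^sup>+y. g (x(j := (0 + y)/2)) \<partial>M1)
                 + ennreal (1/2) * (\<integral>\<^sup>+y. g (x(j := (1 + y)/2)) \<partial>M1)" by simp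
  qed
  also have "\<dots> = ennreal (1/2) * (\<integral>\<^sup>+x. (\<integral>\<^sup>+y. g (phi j 0 (x(j := y))) \<partial>M1) \<partial>?P)
                 + ennreal (1/2) * (\<integral>\<^sup>+x. (\<integral>\<^sup>+y. g (phi j 1 (x(j := y))) \<partial>M1) \<partial>?P)"
    unfolding pj
    using inner_meas[OF g0] inner_meas[OF g1] unfolding pj
    by (simp add: nn_integral_add nn_integral_cmult)
  also have "(\<integral>\<^sup>+x. (\<integral>\<^sup>+y. g (phi j 0 (x(j := y))) \<partial>M1) \<partial>?P) = (\<integral>\<^sup>+x. g (phi j 0 x) \<partial>cube_measure s)"
    unfolding C by (rule PS.product_nn_integral_insert[symmetric]) (use g0 in auto)
  also have "(\<integral>\<^sup>+x. (\<integral>\<^sup>+y. g (phi j 1 (x(j := y))) \<partial>M1) \<partial>?P) = (\<integral>\<^sup>+x. g (phi j 1 x) \<partial>cube_measure s)"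
    unfolding C by (rule PS.product_nn_integral_insert[symmetric]) (use g1 in auto)
  finally show ?thesis .
qed


lemma integral_const_cube: "(\<integral>x. (c::real) \<partial>cube_measure s) = c"
proof -
  interpret prob_space "cube_measure s" by (rule cube_prob)
  show ?thesis by (simp add: prob_space)
qed

lemma measure_cube_space[simp]: "measure (cube_measure s) (space (cube_measure s)) = 1"
  using prob_space.prob_space[OF cube_prob] by simp

lemma integrable_const_cube: "integrable (cube_measure s) (\<lambda>x. (c::real))"
proof -
  interpret prob_space "cube_measure s" by (rule cube_prob)
  show ?thesis by simp
qed

lemma phi_comp_meas:
  assumes "j < s" "0 \<le> c" "c \<le> 1" "g \<in> borel_measurable (cube_measure s)"
  shows "(\<lambda>x. (g x :: real)) \<circ> phi j c \<in> borel_measurable (cube_measure s)"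
  using measurable_comp[OF phi_meas[OF assms(1-3)] assms(4)] by simp

lemma F1_nonneg:
  fixes g :: "(nat \<Rightarrow> real) \<Rightarrow> real"
  assumes j: "j < s" and g: "g \<in> borel_measurable (cube_measure s)"
    and B: "\<And>x. x \<in> cube s \<Longrightarrow> \<bar>g x\<bar> \<le> B" and nn: "\<And>x. x \<in> cube s \<Longrightarrow> 0 \<le> g x"
  shows "(\<integral>x. g x \<partial>cube_measure s) = 1/2 * (\<integral>x. g (phi j 0 x) \<partial>cube_measure s) + 1/2 * (\<integral>x. g (phi j 1 x) \<partial>cube_measure s)"
proof -
  have gc: "(\<lambda>x. g (phi j c x)) \<in> borel_measurable (cube_measure s)" if "0 \<le> c" "c \<le> 1" for c
    using phi_comp_meas[OF j that g] by (simp add: comp_def)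
  have gci: "integrable (cube_measure s) (\<lambda>x. g (phi j c x))" if "0 \<le> c" "c \<le> 1" for c
    by (rule integrable_bounded[OF gc[OF that]]) (use B phi_cube[OF j that] in blast)
  have gi: "integrable (cube_measure s) g" by (rule integrable_bounded[OF g B])
  have nnc: "AE x in cube_measure s. 0 \<le> g (phi j c x)" if "0 \<le> c" "c \<le> 1" for c
    by (rule AE_I2) (use nn phi_cube[OF j that] space_cube in auto)
  have nn0: "AE x in cube_measure s. 0 \<le> g x"
    by (rule AE_I2) (use nn space_cube in auto)
  have gm: "(\<lambda>x. ennreal (g x)) \<in> borel_measurable (cube_measure s)" using g by simp
  have "ennreal (\<integral>x. g x \<partial>cube_measure s) = (\<integral>\<^sup>+x. ennreal (g x) \<partial>cube_measure s)"
    by (rule nn_integral_eq_integral[OF gi nn0, symmetric])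
  also have "\<dots> = ennreal (1/2) * (\<integral>\<^sup>+x. ennreal (g (phi j 0 x)) \<partial>cube_measure s) + ennreal (1/2) * (\<integral>\<^sup>+x. ennreal (g (phi j 1 x)) \<partial>cube_measure s)"
    by (rule F1nn[OF j gm])
  also have "(\<integral>\<^sup>+x. ennreal (g (phi j 0 x)) \<partial>cube_measure s) = ennreal (\<integral>x. g (phi j 0 x) \<partial>cube_measure s)"
    by (rule nn_integral_eq_integral[OF gci nnc]) auto
  also have "(\<integral>\<^sup>+x. ennreal (g (phi j 1 x)) \<partial>cube_measure s) = ennreal (\<integral>x. g (phi j 1 x) \<partial>cube_measure s)"
    by (rule nn_integral_eq_integral[OF gci nnc]) auto
  also have "ennreal (1/2) * ennreal (\<integral>x. g (phi j 0 x) \<partial>cube_measure s) = ennreal (1/2 * (\<integral>x. g (phi j 0 x) \<partial>cube_measure s))"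
    by (rule ennreal_mult[symmetric]) (use integral_nonneg_AE[OF nnc[of 0]] in auto)
  also have "ennreal (1/2) * ennreal (\<integral>x. g (phi j 1 x) \<partial>cube_measure s) = ennreal (1/2 * (\<integral>x. g (phi j 1 x) \<partial>cube_measure s))"
    by (rule ennreal_mult[symmetric]) (use integral_nonneg_AE[OF nnc[of 1]] in auto)
  also have "ennreal (1/2 * (\<integral>x. g (phi j 0 x) \<partial>cube_measure s)) + ennreal (1/2 * (\<integral>x. g (phi j 1 x) \<partial>cube_measure s))
     = ennreal (1/2 * (\<integral>x. g (phi j 0 x) \<partial>cube_measure s) + 1/2 * (\<integral>x. g (phi j 1 x) \<partial>cube_measure s))"
    by (rule ennreal_plus[symmetric]) (use integral_nonneg_AE[OF nnc[of 0]] integral_nonneg_AE[OF nnc[of 1]] in auto)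
  finally have e: "ennreal (\<integral>x. g x \<partial>cube_measure s) = ennreal (1/2 * (\<integral>x. g (phi j 0 x) \<partial>cube_measure s) + 1/2 * (\<integral>x. g (phi j 1 x) \<partial>cube_measure s))" .
  show ?thesis
    using e integral_nonneg_AE[OF nn0] integral_nonneg_AE[OF nnc[of 0]] integral_nonneg_AE[OF nnc[of 1]]
    by (subst (asm) ennreal_inj) auto
qed

lemma F1:
  fixes g :: "(nat \<Rightarrow> real) \<Rightarrow> real"
  assumes j: "j < s" and g: "g \<in> borel_measurable (cube_measure s)"
    and B: "\<And>x. x \<in> cube s \<Longrightarrow> \<bar>g x\<bar> \<le> B"
  shows "(\<integral>x. g x \<partial>cube_measure s) = 1/2 * (\<integral>x. g (phi j 0 x) \<partial>cube_measure s) + 1/2 * (\<integral>x. g (phi j 1 x) \<partial>cube_measure s)"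
proof -
  define u where "u x = g x + B" for x
  have um: "u \<in> borel_measurable (cube_measure s)" unfolding u_def[abs_def] using g by simp
  have uB: "\<bar>u x\<bar> \<le> 2 * B" if "x \<in> cube s" for x using B[OF that] by (auto simp: u_def)
  have un: "0 \<le> u x" if "x \<in> cube s" for x using B[OF that] by (auto simp: u_def)
  have gc: "(\<lambda>x. g (phi j c x)) \<in> borel_measurable (cube_measure s)" if "0 \<le> c" "c \<le> 1" for c
    using phi_comp_meas[OF j that g] by (simp add: comp_def)
  have gci: "integrable (cube_measure s) (\<lambda>x. g (phi j c x))" if "0 \<le> c" "c \<le> 1" for c
    by (rule integrable_bounded[OF gc[OF that]]) (use B phi_cube[OF j that] in blast)
  have gi: "integrable (cube_measure s) g" by (rule integrable_bounded[OF g B])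
  have ig: "(\<integral>x. u x \<partial>cube_measure s) = (\<integral>x. g x \<partial>cube_measure s) + B"
    unfolding u_def using gi integrable_const_cube by (simp add: integral_const_cube)
  have igc: "(\<integral>x. u (phi j c x) \<partial>cube_measure s) = (\<integral>x. g (phi j c x) \<partial>cube_measure s) + B"
    if "0 \<le> c" "c \<le> 1" for c
    unfolding u_def using gci[OF that] integrable_const_cube by (simp add: integral_const_cube)
  have "(\<integral>x. u x \<partial>cube_measure s) = 1/2 * (\<integral>x. u (phi j 0 x) \<partial>cube_measure s) + 1/2 * (\<integral>x. u (phi j 1 x) \<partial>cube_measure s)"
    by (rule F1_nonneg[OF j um uB un])
  then show ?thesis using ig igc[of 0] igc[of 1] by linarith
qed

definition f0 :: "nat \<Rightarrow> real \<Rightarrow> ((nat \<Rightarrow> real) \<Rightarrow> real) \<Rightarrow> (nat \<Rightarrow> real) \<Rightarrow> real" where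
  "f0 j \<sigma> f x = (f (phi j 0 x) + \<sigma> * f (phi j 1 x)) / 2"

definition cnt :: "nat \<Rightarrow> nat list \<Rightarrow> nat" where
  "cnt j js = length (filter (\<lambda>i. i = j) js)"

lemma cube_upd:
  assumes "x \<in> cube s" "i < s" "t \<in> {0..1}"
  shows "x(i := t) \<in> cube s"
proof -
  from PiE_fun_upd[where f=x and S="{..<s}" and T="\<lambda>_. {0..1}", OF assms(3)] assms(1)
  have "x(i := t) \<in> PiE (insert i {..<s}) (\<lambda>_. {0..1})" by (simp add: cube_def)
  moreover have "insert i {..<s} = {..<s}" using assms(2) by auto
  ultimately show ?thesis by (simp add: cube_def)
qed

lemma partial_hasderiv:
  assumes "(\<lambda>t. H (z(i := t))) differentiable (at (z i) within {0..1})"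
  shows "((\<lambda>t. H (z(i := t))) has_vector_derivative partial i H z) (at (z i) within {0..1})"
  using assms unfolding partial_def by (simp add: vector_derivative_works)

lemma deriv_phi:
  assumes j: "j < s" and i: "i < s" and c: "0 \<le> c" "c \<le> 1" and x: "x \<in> cube s"
    and dH: "\<And>z. z \<in> cube s \<Longrightarrow> (\<lambda>t. H (z(i := t))) differentiable (at (z i) within {0..1})"
  shows "((\<lambda>t. H (phi j c (x(i := t)))) has_vector_derivative
            (if i = j then 1/2 else 1) * partial i H (phi j c x)) (at (x i) within {0..1})"
proof (cases "i = j")
  case False
  let ?z = "phi j c x"
  have z: "?z \<in> cube s" by (rule phi_cube[OF j c x])
  have e: "phi j c (x(i := t)) = ?z(i := t)" for t
    using False by (simp add: phi_def fun_upd_twist)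
  have zi: "?z i = x i" using False by (simp add: phi_def)
  from partial_hasderiv[OF dH[OF z]]
  have D: "((\<lambda>t. H (?z(i := t))) has_vector_derivative partial i H ?z) (at (x i) within {0..1})"
    by (simp only: zi)
  have E: "(\<lambda>t. H (phi j c (x(i := t)))) = (\<lambda>t. H (?z(i := t)))"
    by (simp only: e)
  show ?thesis unfolding E using D False by (simp only: if_False mult_1 simp_thms)
next
  case True
  let ?z = "phi j c x"
  have z: "?z \<in> cube s" by (rule phi_cube[OF j c x])
  have D1: "((\<lambda>u. H (?z(j := u))) has_vector_derivative partial j H ?z) (at (?z j) within {0..1})"
    using partial_hasderiv[OF dH[OF z]] by (simp only: True)
  have zj: "?z j = (c + x j) / 2" by (simp add: phi_def)
  have xj: "x j \<in> {0..1}" using cube_comp[OF x j] .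
  have fD: "((\<lambda>t. (c + t) / 2) has_vector_derivative 1/2) (at (x j) within {0..1})"
    by (auto intro!: derivative_eq_intros simp: has_real_derivative_iff_has_vector_derivative[symmetric])
  have img: "(\<lambda>t. (c + t) / 2) ` {0..1} \<subseteq> {0..1}" using c by auto
  have D2: "((\<lambda>u. H (?z(j := u))) has_vector_derivative partial j H ?z) (at ((\<lambda>t. (c + t) / 2) (x j)) within (\<lambda>t. (c + t) / 2) ` {0..1})"
    using has_vector_derivative_within_subset[OF D1 img] zj by simp
  have "(((\<lambda>u. H (?z(j := u))) \<circ> (\<lambda>t. (c + t) / 2)) has_vector_derivative (1/2) *\<^sub>R partial j H ?z) (at (x j) within {0..1})"
    by (rule vector_diff_chain_within[OF fD D2])
  moreover have "((\<lambda>u. H (?z(j := u))) \<circ> (\<lambda>t. (c + t) / 2)) = (\<lambda>t. H (phi j c (x(j := t))))"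
    by (auto simp: phi_def)
  ultimately show ?thesis using True by simp
qed

lemma deriv_f0:
  assumes j: "j < s" and i: "i < s" and x: "x \<in> cube s"
    and dH: "\<And>z. z \<in> cube s \<Longrightarrow> (\<lambda>t. H (z(i := t))) differentiable (at (z i) within {0..1})"
  shows "((\<lambda>t. f0 j \<sigma> H (x(i := t))) has_vector_derivative
            (if i = j then 1/2 else 1) * f0 j \<sigma> (partial i H) x) (at (x i) within {0..1})"
proof -
  let ?fac = "(if i = j then 1/2 else 1) :: real"
  have A: "((\<lambda>t. H (phi j 0 (x(i := t)))) has_real_derivative ?fac * partial i H (phi j 0 x)) (at (x i) within {0..1})"
    using deriv_phi[OF j i _ _ x dH, of 0] by (simp add: has_real_derivative_iff_has_vector_derivative)
  have B: "((\<lambda>t. H (phi j 1 (x(i := t)))) has_real_derivative ?fac * partial i H (phi j 1 x)) (at (x i) within {0..1})"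
    using deriv_phi[OF j i _ _ x dH, of 1] by (simp add: has_real_derivative_iff_has_vector_derivative)
  have "((\<lambda>t. (H (phi j 0 (x(i := t))) + \<sigma> * H (phi j 1 (x(i := t)))) / 2) has_real_derivative
        (?fac * partial i H (phi j 0 x) + \<sigma> * (?fac * partial i H (phi j 1 x))) / 2) (at (x i) within {0..1})"
    by (intro DERIV_cdivide DERIV_add DERIV_cmult A B)
  moreover have "(?fac * partial i H (phi j 0 x) + \<sigma> * (?fac * partial i H (phi j 1 x))) / 2 = ?fac * f0 j \<sigma> (partial i H) x"
    by (simp add: f0_def algebra_simps)
  ultimately show ?thesis
    by (simp add: f0_def has_real_derivative_iff_has_vector_derivative)
qed


lemma smooth_diff:
  assumes "smooth_cube s f" "set js \<subseteq> {..<s}" "i < s" "z \<in> cube s"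
  shows "(\<lambda>t. iter_partial js f (z(i := t))) differentiable (at (z i) within {0..1})"
  using assms unfolding smooth_cube_def by blast

lemma smooth_cont:
  assumes "smooth_cube s f" "set js \<subseteq> {..<s}"
  shows "continuous_on (cube s) (iter_partial js f)"
  using assms unfolding smooth_cube_def by blast

lemma deriv_F0:
  assumes sm: "smooth_cube s f" and j: "j < s" and js: "set js \<subseteq> {..<s}" and i: "i < s" and x: "x \<in> cube s"
    and form: "\<And>z. z \<in> cube s \<Longrightarrow> iter_partial js (f0 j \<sigma> f) z = (1/2)^(cnt j js) * f0 j \<sigma> (iter_partial js f) z"
  shows "((\<lambda>t. iter_partial js (f0 j \<sigma> f) (x(i := t))) has_vector_derivative
           (1/2)^(cnt j (i # js)) * f0 j \<sigma> (iter_partial (i # js) f) x) (at (x i) within {0..1})"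
proof -
  let ?H = "iter_partial js f"
  let ?c = "(1/2::real)^(cnt j js)"
  let ?fac = "(if i = j then 1/2 else 1) :: real"
  have dH: "\<And>z. z \<in> cube s \<Longrightarrow> (\<lambda>t. ?H (z(i := t))) differentiable (at (z i) within {0..1})"
    using smooth_diff[OF sm js i] by blast
  have D0: "((\<lambda>t. f0 j \<sigma> ?H (x(i := t))) has_real_derivative ?fac * f0 j \<sigma> (partial i ?H) x) (at (x i) within {0..1})"
    using deriv_f0[OF j i x dH, of \<sigma>] by (simp add: has_real_derivative_iff_has_vector_derivative)
  have D1: "((\<lambda>t. ?c * f0 j \<sigma> ?H (x(i := t))) has_vector_derivative ?c * (?fac * f0 j \<sigma> (partial i ?H) x)) (at (x i) within {0..1})"
    using DERIV_cmult[OF D0, of ?c] by (simp add: has_real_derivative_iff_has_vector_derivative)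
  have xi: "x i \<in> {0..1}" using cube_comp[OF x i] .
  have D2: "((\<lambda>t. iter_partial js (f0 j \<sigma> f) (x(i := t))) has_vector_derivative ?c * (?fac * f0 j \<sigma> (partial i ?H) x)) (at (x i) within {0..1})"
  proof (rule has_vector_derivative_transform_within[OF D1 zero_less_one xi])
    fix t :: real assume "t \<in> {0..1}"
    then have "x(i := t) \<in> cube s" using cube_upd[OF x i] by blast
    then show "?c * f0 j \<sigma> ?H (x(i := t)) = iter_partial js (f0 j \<sigma> f) (x(i := t))"
      using form by simp
  qed
  have eqv: "?c * (?fac * f0 j \<sigma> (partial i ?H) x) = (1/2)^(cnt j (i # js)) * f0 j \<sigma> (iter_partial (i # js) f) x"
    by (simp add: cnt_def)
  show ?thesis using D2 unfolding eqv .
qed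

lemma Dform:
  assumes sm: "smooth_cube s f" and j: "j < s"
  shows "set js \<subseteq> {..<s} \<Longrightarrow> x \<in> cube s \<Longrightarrow>
    iter_partial js (f0 j \<sigma> f) x = (1/2)^(cnt j js) * f0 j \<sigma> (iter_partial js f) x"
proof (induction js arbitrary: x)
  case Nil
  then show ?case by (simp add: cnt_def)
next
  case (Cons i js)
  have js: "set js \<subseteq> {..<s}" and i: "i < s" using Cons.prems by auto
  have D: "((\<lambda>t. iter_partial js (f0 j \<sigma> f) (x(i := t))) has_vector_derivative
           (1/2)^(cnt j (i # js)) * f0 j \<sigma> (iter_partial (i # js) f) x) (at (x i) within {0..1})"
    by (rule deriv_F0[OF sm j js i Cons.prems(2)]) (rule Cons.IH[OF js])
  have xi: "x i \<in> {0..1}" using cube_comp[OF Cons.prems(2) i] .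
  have "iter_partial (i # js) (f0 j \<sigma> f) x = vector_derivative (\<lambda>t. iter_partial js (f0 j \<sigma> f) (x(i := t))) (at (x i) within {0..1})"
    by (simp add: partial_def)
  also have "\<dots> = (1/2)^(cnt j (i # js)) * f0 j \<sigma> (iter_partial (i # js) f) x"
    by (rule vector_derivative_within_closed_interval[OF zero_less_one xi D])
  finally show ?case .
qed

lemma phi_cont: "continuous_on S (phi j c)"
proof (rule continuous_on_coordinatewise_then_product)
  fix k
  show "continuous_on S (\<lambda>x. phi j c x k)"
  proof (cases "k = j")
    case True
    have "continuous_on S (\<lambda>x. (c + x j) / 2)"
      by (intro continuous_intros continuous_on_subset[OF continuous_on_product_coordinates]) auto
    then show ?thesis using True by (simp add: phi_def)
  next
    case False
    have "continuous_on S (\<lambda>x. x k)"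
      by (rule continuous_on_subset[OF continuous_on_product_coordinates]) auto
    then show ?thesis using False by (simp add: phi_def)
  qed
qed

lemma f0_cont:
  assumes j: "j < s" and H: "continuous_on (cube s) H"
  shows "continuous_on (cube s) (f0 j \<sigma> H)"
proof -
  have c: "continuous_on (cube s) (\<lambda>x. H (phi j c x))" if "0 \<le> c" "c \<le> 1" for c
    by (rule continuous_on_compose2[OF H phi_cont]) (use phi_cube[OF j that] in auto)
  show ?thesis unfolding f0_def[abs_def]
    by (intro continuous_intros c) auto
qed

lemma smooth_f0:
  assumes sm: "smooth_cube s f" and j: "j < s"
  shows "smooth_cube s (f0 j \<sigma> f)"
  unfolding smooth_cube_def
proof (intro allI impI conjI ballI)
  fix js assume js: "set js \<subseteq> {..<s}"
  have form: "\<And>z. z \<in> cube s \<Longrightarrow> iter_partial js (f0 j \<sigma> f) z = (1/2)^(cnt j js) * f0 j \<sigma> (iter_partial js f) z"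
    using Dform[OF sm j js] by blast
  have cc: "continuous_on (cube s) (\<lambda>z. (1/2)^(cnt j js) * f0 j \<sigma> (iter_partial js f) z)"
    by (intro continuous_intros f0_cont[OF j] smooth_cont[OF sm js])
  have eq: "continuous_on (cube s) (iter_partial js (f0 j \<sigma> f)) = continuous_on (cube s) (\<lambda>z. (1/2)^(cnt j js) * f0 j \<sigma> (iter_partial js f) z)"
    by (rule continuous_on_cong[OF refl form])
  show "continuous_on (cube s) (iter_partial js (f0 j \<sigma> f))"
    using eq cc by (simp only:)
  fix i x assume i: "i < s" and x: "x \<in> cube s"
  show "(\<lambda>t. iter_partial js (f0 j \<sigma> f) (x(i := t))) differentiable (at (x i) within {0..1})"
    using deriv_F0[OF sm j js i x form] by (rule differentiableI_vector)
qed

lemma M1_HK: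
  fixes g :: "real \<Rightarrow> real"
  assumes g: "continuous_on {0..1} g"
  shows "integrable M1 g" "integral\<^sup>L M1 g = integral {0..1} g"
proof -
  have si: "integrable lborel (\<lambda>x. indicator {0..1} x *\<^sub>R g x)"
    by (rule borel_integrable_compact[OF compact_Icc g])
  show "integrable M1 g"
    using si by (subst integrable_restrict_space) auto
  have "integral\<^sup>L M1 g = integral\<^sup>L lborel (\<lambda>x. indicator {0..1} x *\<^sub>R g x)"
    by (rule integral_restrict_space) auto
  also have "\<dots> = set_lebesgue_integral lborel {0..1} g"
    by (simp add: set_lebesgue_integral_def)
  also have "\<dots> = integral {0..1} g"
    by (rule set_borel_integral_eq_integral(2)) (use si in \<open>simp add: set_integrable_def\<close>)
  finally show "integral\<^sup>L M1 g = integral {0..1} g" .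
qed

lemma FTC_bound:
  fixes \<gamma> \<gamma>' :: "real \<Rightarrow> real"
  assumes c': "continuous_on {0..1} \<gamma>'"
    and d: "\<And>t. t \<in> {0..1} \<Longrightarrow> (\<gamma> has_vector_derivative \<gamma>' t) (at t within {0..1})"
    and ab: "0 \<le> a" "a \<le> b" "b \<le> 1"
  shows "\<bar>\<gamma> b - \<gamma> a\<bar> \<le> integral {0..1} (\<lambda>t. \<bar>\<gamma>' t\<bar>)"
proof -
  have sub: "{a..b} \<subseteq> {0..1}" using ab by auto
  have "(\<gamma>' has_integral \<gamma> b - \<gamma> a) {a..b}"
    by (rule fundamental_theorem_of_calculus[OF ab(2)])
       (use d sub in \<open>blast intro: has_vector_derivative_within_subset\<close>)
  then have e: "integral {a..b} \<gamma>' = \<gamma> b - \<gamma> a" by (rule integral_unique)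
  have c'ab: "continuous_on {a..b} \<gamma>'" using continuous_on_subset[OF c' sub] .
  have i1: "\<gamma>' integrable_on {a..b}" by (rule integrable_continuous_interval[OF c'ab])
  have i2: "(\<lambda>t. \<bar>\<gamma>' t\<bar>) integrable_on {a..b}"
    by (rule integrable_continuous_interval) (intro continuous_intros c'ab)
  have i3: "(\<lambda>t. \<bar>\<gamma>' t\<bar>) integrable_on {0..1}"
    by (rule integrable_continuous_interval) (intro continuous_intros c')
  have "\<bar>\<gamma> b - \<gamma> a\<bar> = norm (integral {a..b} \<gamma>')" using e by simp
  also have "\<dots> \<le> integral {a..b} (\<lambda>t. \<bar>\<gamma>' t\<bar>)"
    by (rule integral_norm_bound_integral[OF i1 i2]) simp
  also have "\<dots> \<le> integral {0..1} (\<lambda>t. \<bar>\<gamma>' t\<bar>)"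
    by (rule integral_subset_le[OF sub i2 i3]) simp
  finally show ?thesis .
qed

lemma upd_cont: "continuous_on S (\<lambda>t::real. x(j := t))"
proof (rule continuous_on_coordinatewise_then_product)
  fix k show "continuous_on S (\<lambda>t. (x(j := t)) k)"
    by (cases "k = j") (simp_all add: continuous_on_id continuous_on_const)
qed

lemma space_P_upd:
  assumes "j < s" "x \<in> space (PiM ({..<s} - {j}) (\<lambda>_. M1))" "t \<in> {0..1}"
  shows "x(j := t) \<in> cube s"
proof -
  have "x \<in> PiE ({..<s} - {j}) (\<lambda>_. {0..1})" using assms(2) by (simp add: space_PiM space_restrict_space)
  from PiE_fun_upd[where f=x and S="{..<s} - {j}" and T="\<lambda>_. {0..1}", OF assms(3) this]
  have "x(j := t) \<in> PiE (insert j ({..<s} - {j})) (\<lambda>_. {0..1})" .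
  then show ?thesis using cube_insert[OF assms(1)] by (simp add: cube_def)
qed


lemma F2:
  assumes sm: "smooth_cube s f" and j: "j < s" and L: "set L \<subseteq> {..<s}"
  shows "(\<integral>x. \<bar>iter_partial L f (phi j 0 x) - iter_partial L f (phi j 1 x)\<bar> \<partial>cube_measure s)
         \<le> (\<integral>x. \<bar>iter_partial (j # L) f x\<bar> \<partial>cube_measure s)"
proof -
  let ?G = "iter_partial L f"
  let ?G' = "iter_partial (j # L) f"
  let ?I = "{..<s} - {j}"
  let ?P = "PiM ?I (\<lambda>_. M1)"
  define A where "A x = \<bar>?G (phi j 0 x) - ?G (phi j 1 x)\<bar>" for x
  define B where "B x = \<bar>?G' x\<bar>" for x
  have C: "cube_measure s = PiM (insert j ?I) (\<lambda>_. M1)"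
    unfolding cube_measure_def cube_insert[OF j] ..
  have Gc: "continuous_on (cube s) ?G" by (rule smooth_cont[OF sm L])
  have G'c: "continuous_on (cube s) ?G'" by (rule smooth_cont[OF sm]) (use L j in auto)
  have Ac: "continuous_on (cube s) A"
  proof -
    have c: "continuous_on (cube s) (\<lambda>x. ?G (phi j c x))" if "0 \<le> c" "c \<le> 1" for c
      by (rule continuous_on_compose2[OF Gc phi_cont]) (use phi_cube[OF j that] in auto)
    show ?thesis unfolding A_def[abs_def] by (intro continuous_intros c) auto
  qed
  have Bc: "continuous_on (cube s) B" unfolding B_def[abs_def] by (intro continuous_intros G'c)
  have Ai: "integrable (cube_measure s) A" by (rule cont_integrable[OF Ac])
  have Bi: "integrable (cube_measure s) B" by (rule cont_integrable[OF Bc])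
  have Am: "A \<in> borel_measurable (cube_measure s)" by (rule cont_meas[OF Ac])
  have Bm: "B \<in> borel_measurable (cube_measure s)" by (rule cont_meas[OF Bc])
  have Ann: "AE x in cube_measure s. 0 \<le> A x" by (simp add: A_def)
  have Bnn: "AE x in cube_measure s. 0 \<le> B x" by (simp add: B_def)
  have "ennreal (\<integral>x. A x \<partial>cube_measure s) = (\<integral>\<^sup>+x. ennreal (A x) \<partial>cube_measure s)"
    by (rule nn_integral_eq_integral[OF Ai Ann, symmetric])
  also have "\<dots> = (\<integral>\<^sup>+x. (\<integral>\<^sup>+y. ennreal (A (x(j := y))) \<partial>M1) \<partial>?P)"
    unfolding C by (rule PS.product_nn_integral_insert) (use Am C in auto)
  also have "\<dots> \<le> (\<integral>\<^sup>+x. (\<integral>\<^sup>+y. ennreal (B (x(j := y))) \<partial>M1) \<partial>?P)"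
  proof (rule nn_integral_mono)
    fix x assume x: "x \<in> space ?P"
    define K where "K = integral {0..1} (\<lambda>t. \<bar>?G' (x(j := t))\<bar>)"
    have xc: "\<And>t. t \<in> {0..1} \<Longrightarrow> x(j := t) \<in> cube s" using space_P_upd[OF j x] by blast
    have gc': "continuous_on {0..1} (\<lambda>t. ?G' (x(j := t)))"
      by (rule continuous_on_compose2[OF G'c upd_cont]) (use xc in auto)
    have gd: "((\<lambda>t. ?G (x(j := t))) has_vector_derivative ?G' (x(j := t))) (at t within {0..1})"
      if t: "t \<in> {0..1}" for t
    proof -
      have z: "x(j := t) \<in> cube s" by (rule xc[OF t])
      have "((\<lambda>u. ?G ((x(j := t))(j := u))) has_vector_derivative partial j ?G (x(j := t))) (at ((x(j := t)) j) within {0..1})"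
        by (rule partial_hasderiv[OF smooth_diff[OF sm L j z]])
      then show ?thesis by simp
    qed
    have Ab: "A (x(j := y)) \<le> K" if y: "y \<in> {0..1}" for y
    proof -
      have "A (x(j := y)) = \<bar>?G (x(j := (1 + y)/2)) - ?G (x(j := (0 + y)/2))\<bar>"
        by (simp add: A_def phi_def abs_minus_commute)
      also have "\<dots> \<le> K" unfolding K_def
        by (rule FTC_bound[OF gc' gd]) (use y in auto)
      finally show ?thesis .
    qed
    have "(\<integral>\<^sup>+y. ennreal (A (x(j := y))) \<partial>M1) \<le> (\<integral>\<^sup>+y. ennreal K \<partial>M1)"
      by (rule nn_integral_mono) (use Ab in \<open>auto simp: space_restrict_space intro: ennreal_leI\<close>)
    also have "\<dots> = ennreal K"
      using prob_space.emeasure_space_1[OF M1_prob] by simp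
    also have "ennreal K = ennreal (integral\<^sup>L M1 (\<lambda>t. B (x(j := t))))"
      using M1_HK(2)[of "\<lambda>t. \<bar>?G' (x(j := t))\<bar>"] gc' unfolding K_def B_def
      by (simp add: continuous_on_rabs)
    also have "\<dots> = (\<integral>\<^sup>+y. ennreal (B (x(j := y))) \<partial>M1)"
      by (rule nn_integral_eq_integral[symmetric])
         (use M1_HK(1)[of "\<lambda>t. \<bar>?G' (x(j := t))\<bar>"] gc' in \<open>auto simp: B_def continuous_on_rabs\<close>)
    finally show "(\<integral>\<^sup>+y. ennreal (A (x(j := y))) \<partial>M1) \<le> (\<integral>\<^sup>+y. ennreal (B (x(j := y))) \<partial>M1)" .
  qed
  also have "\<dots> = (\<integral>\<^sup>+x. ennreal (B x) \<partial>cube_measure s)"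
    unfolding C by (rule PS.product_nn_integral_insert[symmetric]) (use Bm C in auto)
  also have "\<dots> = ennreal (\<integral>x. B x \<partial>cube_measure s)"
    by (rule nn_integral_eq_integral[OF Bi Bnn])
  finally have "ennreal (\<integral>x. A x \<partial>cube_measure s) \<le> ennreal (\<integral>x. B x \<partial>cube_measure s)" .
  then have "(\<integral>x. A x \<partial>cube_measure s) \<le> (\<integral>x. B x \<partial>cube_measure s)"
    using integral_nonneg_AE[OF Bnn] by (simp add: ennreal_le_iff)
  then show ?thesis by (simp add: A_def B_def)
qed

definition dlist :: "nat \<Rightarrow> (nat \<Rightarrow> nat) \<Rightarrow> nat list" where
  "dlist s k = concat (map (\<lambda>i. replicate (card (kappa (k i))) i) [0..<s])"

lemma mixed_deriv_dlist: "mixed_deriv s k f = iter_partial (dlist s k) f"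
  by (simp add: mixed_deriv_def dlist_def)

lemma set_dlist: "set (dlist s k) \<subseteq> {..<s}"
  by (auto simp: dlist_def)

lemma concat_split:
  assumes "j < s"
  shows "concat (map (\<lambda>i. replicate (c i) i) [0..<s]) =
     concat (map (\<lambda>i. replicate (c i) i) [0..<j]) @ replicate (c j) j @ concat (map (\<lambda>i. replicate (c i) i) [Suc j..<s])"
proof -
  have "[0..<s] = [0..<j] @ [j..<s]" using assms upt_add_eq_append[of 0 j "s - j"] by simp
  also have "[j..<s] = j # [Suc j..<s]" using assms by (rule upt_conv_Cons)
  finally show ?thesis by simp
qed

lemma cnt_replicate: "cnt j (replicate n i) = (if i = j then n else 0)"
  by (simp add: cnt_def)

lemma cnt_append: "cnt j (xs @ ys) = cnt j xs + cnt j ys"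
  by (simp add: cnt_def)

lemma cnt_concat_other: "j \<notin> set xs \<Longrightarrow> cnt j (concat (map (\<lambda>i. replicate (c i) i) xs)) = 0"
  by (induction xs) (auto simp: cnt_append cnt_replicate, simp add: cnt_def)

lemma cnt_dlist: "j < s \<Longrightarrow> cnt j (dlist s k) = card (kappa (k j))"
  unfolding dlist_def
  by (subst concat_split[of j s]) (auto simp: cnt_append cnt_replicate cnt_concat_other)

lemma walsh_zero: "(\<forall>i<s. k i = 0) \<Longrightarrow> walsh s k x = 1"
  by (simp add: walsh_def)

lemma dlist_zero: "(\<forall>i<s. k i = 0) \<Longrightarrow> dlist s k = []"
  by (simp add: dlist_def)

lemma norm1_zero: "(\<forall>i<s. k i = 0) \<Longrightarrow> norm1 s k = 0"
  by (simp add: norm1_def)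

lemma AE_not1:
  assumes "j < s"
  shows "AE x in cube_measure s. x j \<noteq> 1"
proof -
  have "AE y in M1. y \<noteq> 1"
    using AE_lborel_singleton[of "1::real"] by (subst AE_restrict_space_iff) (auto elim: AE_mp)
  then show ?thesis unfolding cube_measure_def
    by (intro AE_PiM_component[where M="\<lambda>_. M1" and P="\<lambda>y. y \<noteq> 1" and i=j] M1_prob) (use assms in auto)
qed

lemma fhat_step:
  assumes sm: "smooth_cube s f" and j: "j < s"
  shows "fhat s f k = fhat s (f0 j ((-1) ^ (k j mod 2)) f) (k(j := k j div 2))"
proof -
  let ?k' = "k(j := k j div 2)"
  let ?\<sigma> = "(-1::real) ^ (k j mod 2)"
  define g where "g x = f x * walsh s k x" for x
  have fc: "continuous_on (cube s) f" using smooth_cont[OF sm, of "[]"] by simp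
  obtain B where B: "\<And>x. x \<in> cube s \<Longrightarrow> \<bar>f x\<bar> \<le> B" using cont_bounded[OF fc] by blast
  have fm: "f \<in> borel_measurable (cube_measure s)" by (rule cont_meas[OF fc])
  have gm: "g \<in> borel_measurable (cube_measure s)"
    unfolding g_def[abs_def] using fm walsh_meas by measurable
  have gB: "\<bar>g x\<bar> \<le> B" if "x \<in> cube s" for x
    using B[OF that] by (simp add: g_def abs_mult walsh_abs)
  have gcm: "(\<lambda>x. g (phi j c x)) \<in> borel_measurable (cube_measure s)" if "0 \<le> c" "c \<le> 1" for c
    using phi_comp_meas[OF j that gm] by (simp add: comp_def)
  have gci: "integrable (cube_measure s) (\<lambda>x. g (phi j c x))" if "0 \<le> c" "c \<le> 1" for c
    by (rule integrable_bounded[OF gcm[OF that]]) (use gB phi_cube[OF j that] in blast)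
  have F0c: "continuous_on (cube s) (f0 j ?\<sigma> f)" by (rule f0_cont[OF j fc])
  have hm: "(\<lambda>x. f0 j ?\<sigma> f x * walsh s ?k' x) \<in> borel_measurable (cube_measure s)"
    using cont_meas[OF F0c] walsh_meas by measurable
  have "fhat s f k = (\<integral>x. g x \<partial>cube_measure s)" by (simp add: fhat_def g_def)
  also have "\<dots> = 1/2 * (\<integral>x. g (phi j 0 x) \<partial>cube_measure s) + 1/2 * (\<integral>x. g (phi j 1 x) \<partial>cube_measure s)"
    by (rule F1[OF j gm gB])
  also have "\<dots> = (\<integral>x. 1/2 * g (phi j 0 x) + 1/2 * g (phi j 1 x) \<partial>cube_measure s)"
    using gci[of 0] gci[of 1] by simp
  also have "\<dots> = (\<integral>x. f0 j ?\<sigma> f x * walsh s ?k' x \<partial>cube_measure s)"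
  proof (rule integral_cong_AE)
    show "(\<lambda>x. 1/2 * g (phi j 0 x) + 1/2 * g (phi j 1 x)) \<in> borel_measurable (cube_measure s)"
      using gcm[of 0] gcm[of 1] by measurable
    show "(\<lambda>x. f0 j ?\<sigma> f x * walsh s ?k' x) \<in> borel_measurable (cube_measure s)" by (rule hm)
    show "AE x in cube_measure s. 1/2 * g (phi j 0 x) + 1/2 * g (phi j 1 x) = f0 j ?\<sigma> f x * walsh s ?k' x"
      using AE_not1[OF j] AE_space
    proof eventually_elim
      case (elim x)
      then have True: "x \<in> cube s" by (simp add: space_cube)
      show ?case
      proof -
        have xj: "0 \<le> x j" "x j < 1" using cube_comp[OF True j] elim by auto
        have w0: "walsh s k (phi j 0 x) = walsh s ?k' x"
          using walsh_half0[where x=x and k=k, OF j xj] by (simp add: phi_def)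
        have w1: "walsh s k (phi j 1 x) = ?\<sigma> * walsh s ?k' x"
          using walsh_half1[where x=x and k=k, OF j xj] by (simp add: phi_def)
        show ?thesis by (simp add: g_def w0 w1 f0_def algebra_simps)
      qed
    qed
  qed
  also have "\<dots> = fhat s (f0 j ?\<sigma> f) ?k'" by (simp add: fhat_def)
  finally show ?thesis .
qed


lemma cont_phi_comp:
  assumes H: "continuous_on (cube s) H" and j: "j < s" and c: "0 \<le> c" "c \<le> 1"
  shows "continuous_on (cube s) (\<lambda>x. H (phi j c x))"
  by (rule continuous_on_compose2[OF H phi_cont]) (use phi_cube[OF j c] in auto)

lemma dlist_even:
  assumes "even (k j)"
  shows "dlist s (k(j := k j div 2)) = dlist s k"
proof -
  have "card (kappa ((k(j := k j div 2)) i)) = card (kappa (k i))" for i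
    using card_kappa_rec[of "k j"] assms by (cases "i = j") (auto simp: even_iff_mod_2_eq_zero)
  then show ?thesis unfolding dlist_def by simp
qed

lemma dlist_odd:
  assumes "odd (k j)" "j < s" "\<forall>i<j. k i = 0"
  shows "dlist s k = j # dlist s (k(j := k j div 2))"
proof -
  let ?k' = "k(j := k j div 2)"
  have a: "concat (map (\<lambda>i. replicate (card (kappa (kk i))) i) [0..<j]) = []" if "\<forall>i<j. kk i = 0" for kk
    using that by (induction j) auto
  have b: "map (\<lambda>i. replicate (card (kappa (?k' i))) i) [Suc j..<s] = map (\<lambda>i. replicate (card (kappa (k i))) i) [Suc j..<s]"
    by (rule map_cong) auto
  have c: "card (kappa (k j)) = Suc (card (kappa (k j div 2)))"
    using card_kappa_rec[of "k j"] assms(1) by (simp add: odd_iff_mod_2_eq_one)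
  have z': "\<forall>i<j. ?k' i = 0" using assms(3) by auto
  show ?thesis unfolding dlist_def
    by (simp only: concat_split[OF assms(2)] a[OF assms(3)] a[OF z'] b c) simp
qed

lemma L1_step:
  assumes sm: "smooth_cube s f" and j: "j < s" and lead: "\<forall>i<j. k i = 0"
  shows "L1norm s (mixed_deriv s (k(j := k j div 2)) (f0 j ((-1) ^ (k j mod 2)) f))
          \<le> (1/2)^(card (kappa (k j))) * L1norm s (mixed_deriv s k f)"
proof -
  let ?k' = "k(j := k j div 2)"
  let ?\<sigma> = "(-1::real) ^ (k j mod 2)"
  let ?L' = "dlist s ?k'"
  let ?M' = "iter_partial ?L' f"
  let ?c' = "card (kappa (k j div 2))"
  have cntL: "cnt j ?L' = ?c'" using cnt_dlist[OF j, of ?k'] by simp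
  have form: "\<And>x. x \<in> cube s \<Longrightarrow> mixed_deriv s ?k' (f0 j ?\<sigma> f) x = (1/2)^?c' * f0 j ?\<sigma> ?M' x"
    unfolding mixed_deriv_dlist using Dform[OF sm j set_dlist] cntL by simp
  have M'c: "continuous_on (cube s) ?M'" by (rule smooth_cont[OF sm set_dlist])
  have M'pc: "continuous_on (cube s) (\<lambda>x. ?M' (phi j c x))" if "0 \<le> c" "c \<le> 1" for c
    by (rule cont_phi_comp[OF M'c j that])
  have L1eq: "L1norm s (mixed_deriv s ?k' (f0 j ?\<sigma> f)) = (1/2)^?c' * (\<integral>x. \<bar>f0 j ?\<sigma> ?M' x\<bar> \<partial>cube_measure s)"
  proof -
    have "L1norm s (mixed_deriv s ?k' (f0 j ?\<sigma> f)) = (\<integral>x. (1/2)^?c' * \<bar>f0 j ?\<sigma> ?M' x\<bar> \<partial>cube_measure s)"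
      unfolding L1norm_def by (rule Bochner_Integration.integral_cong[OF refl]) (simp add: form space_cube abs_mult)
    then show ?thesis by simp
  qed
  show ?thesis
  proof (cases "even (k j)")
    case True
    have c': "?c' = card (kappa (k j))"
      using card_kappa_rec[of "k j"] True by (simp add: even_iff_mod_2_eq_zero)
    have sig: "?\<sigma> = 1" using True by (simp add: even_iff_mod_2_eq_zero)
    have Meq: "?M' = mixed_deriv s k f" unfolding mixed_deriv_dlist dlist_even[where k=k and j=j and s=s, OF True] ..
    let ?M = "mixed_deriv s k f"
    have Mc: "continuous_on (cube s) ?M" using M'c Meq by simp
    have aMc: "continuous_on (cube s) (\<lambda>x. \<bar>?M x\<bar>)" by (intro continuous_intros Mc)
    obtain B where B: "\<And>x. x \<in> cube s \<Longrightarrow> \<bar>\<bar>?M x\<bar>\<bar> \<le> B" using cont_bounded[OF aMc] by blast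
    have Mpc: "continuous_on (cube s) (\<lambda>x. ?M (phi j c x))" if "0 \<le> c" "c \<le> 1" for c
      by (rule cont_phi_comp[OF Mc j that])
    have "(\<integral>x. \<bar>f0 j 1 ?M x\<bar> \<partial>cube_measure s) \<le> (\<integral>x. 1/2 * \<bar>?M (phi j 0 x)\<bar> + 1/2 * \<bar>?M (phi j 1 x)\<bar> \<partial>cube_measure s)"
    proof (rule integral_mono)
      show "integrable (cube_measure s) (\<lambda>x. \<bar>f0 j 1 ?M x\<bar>)"
        by (rule cont_integrable) (intro continuous_intros f0_cont[OF j Mc])
      show "integrable (cube_measure s) (\<lambda>x. 1/2 * \<bar>?M (phi j 0 x)\<bar> + 1/2 * \<bar>?M (phi j 1 x)\<bar>)"
        by (rule cont_integrable) (intro continuous_intros Mpc, auto)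
      fix x show "\<bar>f0 j 1 ?M x\<bar> \<le> 1/2 * \<bar>?M (phi j 0 x)\<bar> + 1/2 * \<bar>?M (phi j 1 x)\<bar>"
        by (simp add: f0_def abs_triangle_ineq[THEN order_trans])
    qed
    also have "\<dots> = 1/2 * (\<integral>x. \<bar>?M (phi j 0 x)\<bar> \<partial>cube_measure s) + 1/2 * (\<integral>x. \<bar>?M (phi j 1 x)\<bar> \<partial>cube_measure s)"
      using cont_integrable[OF continuous_on_rabs[OF Mpc[of 0]]] cont_integrable[OF continuous_on_rabs[OF Mpc[of 1]]]
      by simp
    also have "\<dots> = (\<integral>x. \<bar>?M x\<bar> \<partial>cube_measure s)"
      by (rule F1[OF j cont_meas[OF aMc] B, symmetric])
    finally have X: "(\<integral>x. \<bar>f0 j 1 ?M x\<bar> \<partial>cube_measure s) \<le> L1norm s ?M" by (simp add: L1norm_def)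
    have "L1norm s (mixed_deriv s ?k' (f0 j ?\<sigma> f)) = (1/2)^?c' * (\<integral>x. \<bar>f0 j 1 ?M x\<bar> \<partial>cube_measure s)"
      using L1eq sig Meq by simp
    then show ?thesis using X c' by (simp add: mult_left_mono)
  next
    case False
    have c': "card (kappa (k j)) = Suc ?c'"
      using card_kappa_rec[of "k j"] False by (simp add: odd_iff_mod_2_eq_one)
    have sig: "?\<sigma> = -1" using False by (simp add: odd_iff_mod_2_eq_one)
    have Meq: "mixed_deriv s k f = iter_partial (j # ?L') f"
      unfolding mixed_deriv_dlist dlist_odd[where k=k and j=j and s=s, OF False j lead] ..
    have "(\<integral>x. \<bar>f0 j (-1) ?M' x\<bar> \<partial>cube_measure s) = 1/2 * (\<integral>x. \<bar>?M' (phi j 0 x) - ?M' (phi j 1 x)\<bar> \<partial>cube_measure s)"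
      by (simp add: f0_def)
    also have "\<dots> \<le> 1/2 * (\<integral>x. \<bar>iter_partial (j # ?L') f x\<bar> \<partial>cube_measure s)"
      using F2[OF sm j set_dlist] by simp
    finally have X: "(\<integral>x. \<bar>f0 j (-1) ?M' x\<bar> \<partial>cube_measure s) \<le> 1/2 * L1norm s (mixed_deriv s k f)"
      unfolding Meq L1norm_def .
    have "L1norm s (mixed_deriv s ?k' (f0 j ?\<sigma> f)) = (1/2)^?c' * (\<integral>x. \<bar>f0 j (-1) ?M' x\<bar> \<partial>cube_measure s)"
      using L1eq sig by simp
    then show ?thesis using mult_left_mono[OF X, of "(1/2)^?c'"] c' by simp
  qed
qed


lemma WB:
  assumes "smooth_cube s f" "k \<in> idx s"
  shows "\<bar>fhat s f k\<bar> \<le> (1/2)^(norm1 s k) * L1norm s (mixed_deriv s k f)"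
  using assms
proof (induction k arbitrary: f rule: measure_induct_rule[where f="\<lambda>k. \<Sum>i<s. k i"])
  case (less k)
  note sm = less.prems(1) and kidx = less.prems(2)
  show ?case
  proof (cases "\<forall>i<s. k i = 0")
    case True
    have "fhat s f k = (\<integral>x. f x \<partial>cube_measure s)" by (simp add: fhat_def walsh_zero[OF True])
    moreover have "mixed_deriv s k f = f" by (simp add: mixed_deriv_dlist dlist_zero[OF True])
    ultimately show ?thesis by (simp add: norm1_zero[OF True] L1norm_def)
  next
    case False
    then obtain i0 where i0: "i0 < s" "k i0 \<noteq> 0" by auto
    define j where "j = (LEAST i. k i \<noteq> 0)"
    have kj: "k j \<noteq> 0" unfolding j_def by (rule LeastI[of "\<lambda>i. k i \<noteq> 0" i0]) (rule i0(2))
    have lead: "\<forall>i<j. k i = 0" unfolding j_def using not_less_Least by blast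
    have j: "j < s"
    proof (rule ccontr)
      assume "\<not> j < s"
      then have "k j = 0" using kidx by (simp add: idx_def)
      with kj show False by simp
    qed
    let ?k' = "k(j := k j div 2)"
    let ?\<sigma> = "(-1::real) ^ (k j mod 2)"
    have k'idx: "?k' \<in> idx s" using kidx j by (auto simp: idx_def)
    have lt: "(\<Sum>i<s. ?k' i) < (\<Sum>i<s. k i)"
    proof -
      have "(\<Sum>i<s. ?k' i) = ?k' j + (\<Sum>i\<in>{..<s}-{j}. ?k' i)" by (rule sum_split_j[OF j])
      also have "(\<Sum>i\<in>{..<s}-{j}. ?k' i) = (\<Sum>i\<in>{..<s}-{j}. k i)" by (rule sum.cong) auto
      also have "?k' j < k j" using kj by simp
      then have "?k' j + (\<Sum>i\<in>{..<s}-{j}. k i) < k j + (\<Sum>i\<in>{..<s}-{j}. k i)" by simp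
      also have "\<dots> = (\<Sum>i<s. k i)" by (rule sum_split_j[OF j, symmetric])
      finally show ?thesis by simp
    qed
    have sm0: "smooth_cube s (f0 j ?\<sigma> f)" by (rule smooth_f0[OF sm j])
    have IH: "\<bar>fhat s (f0 j ?\<sigma> f) ?k'\<bar> \<le> (1/2)^(norm1 s ?k') * L1norm s (mixed_deriv s ?k' (f0 j ?\<sigma> f))"
      by (rule less.IH[OF lt sm0 k'idx])
    have "\<bar>fhat s f k\<bar> = \<bar>fhat s (f0 j ?\<sigma> f) ?k'\<bar>" using fhat_step[OF sm j] by simp
    also have "\<dots> \<le> (1/2)^(norm1 s ?k') * L1norm s (mixed_deriv s ?k' (f0 j ?\<sigma> f))" by (rule IH)
    also have "\<dots> \<le> (1/2)^(norm1 s ?k') * ((1/2)^(card (kappa (k j))) * L1norm s (mixed_deriv s k f))"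
      by (rule mult_left_mono[OF L1_step[OF sm j lead]]) simp
    also have "\<dots> = (1/2)^(norm1 s k) * L1norm s (mixed_deriv s k f)"
      using norm1_half[OF j, of k] by (simp add: power_add)
    finally show ?thesis .
  qed
qed

definition phiw :: "real \<Rightarrow> real \<Rightarrow> nat \<Rightarrow> real" where
  "phiw a y n = a ^ card (kappa n) * y ^ (\<Sum>l\<in>kappa n. l)"

lemma sum_double: "(\<Sum>n<2*(m::nat). (h n :: real)) = (\<Sum>q<m. h (2*q) + h (2*q+1))"
  by (induction m) (simp_all add: algebra_simps)

lemma phiw_even: "phiw a y (2*q) = phiw (a*y) y q"
proof -
  have "card (kappa (2*q)) = card (kappa q)" using card_kappa_rec[of "2*q"] by simp
  moreover have "(\<Sum>l\<in>kappa (2*q). l) = (\<Sum>l\<in>kappa q. l) + card (kappa q)"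
    using sum_kappa_rec[of "2*q"] by simp
  ultimately show ?thesis by (simp add: phiw_def power_add power_mult_distrib)
qed

lemma phiw_odd: "phiw a y (2*q+1) = a * y * phiw (a*y) y q"
proof -
  have "card (kappa (2*q+1)) = Suc (card (kappa q))" using card_kappa_rec[of "2*q+1"] by simp
  moreover have "(\<Sum>l\<in>kappa (2*q+1). l) = Suc ((\<Sum>l\<in>kappa q. l) + card (kappa q))"
    using sum_kappa_rec[of "2*q+1"] by simp
  ultimately show ?thesis by (simp add: phiw_def power_add power_mult_distrib)
qed

lemma gen_fun: "(\<Sum>n<2^L. phiw a y n) = (\<Prod>l<L. 1 + a * y ^ Suc l)"
proof (induction L arbitrary: a)
  case 0
  then show ?case by (simp add: phiw_def)
next
  case (Suc L)
  have "(\<Sum>n<2^Suc L. phiw a y n) = (\<Sum>q<2^L. phiw a y (2*q) + phiw a y (2*q+1))"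
    by (simp add: sum_double)
  also have "\<dots> = (\<Sum>q<2^L. (1 + a * y) * phiw (a*y) y q)"
  proof (rule sum.cong[OF refl])
    fix q show "phiw a y (2*q) + phiw a y (2*q+1) = (1 + a * y) * phiw (a*y) y q"
      unfolding phiw_even phiw_odd by (simp add: algebra_simps)
  qed
  also have "\<dots> = (1 + a * y) * (\<Sum>q<2^L. phiw (a*y) y q)"
    by (simp add: sum_distrib_left)
  also have "\<dots> = (1 + a * y) * (\<Prod>l<L. 1 + a * y * y ^ Suc l)" by (simp add: Suc.IH)
  also have "\<dots> = (\<Prod>l<Suc L. 1 + a * y ^ Suc l)"
    by (subst prod.lessThan_Suc_shift) (simp add: algebra_simps)
  finally show ?case .
qed

lemma prod_bound:
  fixes a y :: real
  assumes a: "0 \<le> a" and y: "0 \<le> y" "y < 1"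
  shows "(\<Prod>l<L. 1 + a * y ^ Suc l) \<le> exp (a * y / (1 - y))"
proof -
  have "(\<Prod>l<L. 1 + a * y ^ Suc l) \<le> (\<Prod>l<L. exp (a * y ^ Suc l))"
  proof (rule prod_mono)
    fix l :: nat
    have "0 \<le> a * y ^ Suc l" using a y by simp
    then show "0 \<le> 1 + a * y ^ Suc l \<and> 1 + a * y ^ Suc l \<le> exp (a * y ^ Suc l)"
      using exp_ge_add_one_self[of "a * y ^ Suc l"] by simp
  qed
  also have "\<dots> = exp (\<Sum>l<L. a * y ^ Suc l)" by (simp add: exp_sum)
  also have "(\<Sum>l<L. a * y ^ Suc l) = a * y * (\<Sum>l<L. y ^ l)"
    by (simp add: sum_distrib_left algebra_simps)
  also have "(\<Sum>l<L. y ^ l) = (1 - y ^ L) / (1 - y)" using y by (simp add: sum_gp_strict)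
  also have "a * y * ((1 - y ^ L) / (1 - y)) \<le> a * y / (1 - y)"
  proof -
    have "(1 - y ^ L) / (1 - y) \<le> 1 / (1 - y)" using y by (simp add: divide_right_mono)
    then have "a * y * ((1 - y ^ L) / (1 - y)) \<le> a * y * (1 / (1 - y))"
      by (rule mult_left_mono) (use a y in simp)
    then show ?thesis by simp
  qed
  finally show ?thesis by simp
qed


lemma phiw_nonneg: "0 \<le> a \<Longrightarrow> 0 \<le> y \<Longrightarrow> 0 \<le> phiw a y n"
  by (simp add: phiw_def)

lemma w_prod: "a ^ norm0 s k * y ^ norm1 s k = (\<Prod>i<s. phiw a y (k i))"
  by (simp add: norm0_def norm1_def phiw_def power_sum prod.distrib)

lemma finite_sum_bound:
  fixes a y :: real
  assumes a: "0 \<le> a" and y: "0 \<le> y" "y < 1" and F: "finite F" "F \<subseteq> idx s"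
  shows "(\<Sum>k\<in>F. a ^ norm0 s k * y ^ norm1 s k) \<le> exp (a * y / (1 - y)) ^ s"
proof -
  define L where "L = (\<Sum>k\<in>F. \<Sum>i<s. k i)"
  have kL: "k i < 2 ^ L" if "k \<in> F" "i < s" for k i
  proof -
    have "k i \<le> (\<Sum>i<s. k i)" using that by (intro member_le_sum) auto
    also have "\<dots> \<le> L" unfolding L_def using that F by (intro member_le_sum) auto
    also have "L < 2 ^ L" by simp
    finally show ?thesis .
  qed
  let ?r = "\<lambda>k. restrict k {..<s}"
  have inj: "inj_on ?r F"
  proof (rule inj_onI)
    fix k k' assume kk: "k \<in> F" "k' \<in> F" "?r k = ?r k'"
    show "k = k'"
    proof
      fix i show "k i = k' i"
      proof (cases "i < s")
        case True then show ?thesis using fun_cong[OF kk(3), of i] by simp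
      next
        case False
        have "k \<in> idx s" "k' \<in> idx s" using kk(1,2) F(2) by auto
        then show ?thesis using False by (simp add: idx_def)
      qed
    qed
  qed
  have sub: "?r ` F \<subseteq> PiE {..<s} (\<lambda>_. {..<2^L})"
  proof
    fix g assume "g \<in> ?r ` F"
    then obtain k where k: "k \<in> F" "g = ?r k" by blast
    have "\<forall>i\<in>{..<s}. k i \<in> {..<2^L}" using kL[OF k(1)] by simp
    then have "?r k \<in> PiE {..<s} (\<lambda>_. {..<2^L})" by (simp only: restrict_PiE_iff)
    then show "g \<in> PiE {..<s} (\<lambda>_. {..<2^L})" using k(2) by simp
  qed
  have "(\<Sum>k\<in>F. a ^ norm0 s k * y ^ norm1 s k) = (\<Sum>k\<in>F. \<Prod>i<s. phiw a y (?r k i))"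
    by (rule sum.cong[OF refl]) (simp add: w_prod)
  also have "\<dots> = (\<Sum>g\<in>?r ` F. \<Prod>i<s. phiw a y (g i))"
    by (rule sum.reindex[OF inj, symmetric, unfolded comp_def])
  also have "\<dots> \<le> (\<Sum>g\<in>PiE {..<s} (\<lambda>_. {..<2^L}). \<Prod>i<s. phiw a y (g i))"
    by (rule sum_mono2[OF _ sub]) (auto intro!: finite_PiE prod_nonneg phiw_nonneg a y)
  also have "\<dots> = (\<Prod>i<s. \<Sum>n<2^L. phiw a y n)"
    by (rule prod_sum_PiE[symmetric]) auto
  also have "\<dots> = (\<Prod>l<L. 1 + a * y ^ Suc l) ^ s"
    by (simp add: gen_fun)
  also have "\<dots> \<le> exp (a * y / (1 - y)) ^ s"
    by (rule power_mono[OF prod_bound[OF a y]]) (intro prod_nonneg, use a y in simp)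
  finally show ?thesis .
qed

lemma small_digits:
  assumes "\<forall>l\<in>kappa n. l \<le> N"
  shows "n < 2 ^ N"
proof -
  have "take_bit N n = n"
  proof (rule bit_eqI)
    fix p show "bit (take_bit N n) p \<longleftrightarrow> bit n p"
    proof (cases "p < N")
      case True then show ?thesis by (simp add: bit_take_bit_iff)
    next
      case False
      have "\<not> bit n p"
      proof
        assume "bit n p"
        then have "Suc p \<in> kappa n" by (simp add: kappa_def)
        then show False using assms False by auto
      qed
      then show ?thesis by (simp add: bit_take_bit_iff)
    qed
  qed
  then show ?thesis by (simp add: take_bit_nat_eq_self_iff)
qed

lemma Q_sub: "Q s N \<subseteq> (\<lambda>g i. if i < s then g i else 0) ` PiE {..<s} (\<lambda>_. {..<2^N})"
proof
  fix k assume k: "k \<in> Q s N"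
  then have kidx: "k \<in> idx s" and n1: "norm1 s k \<le> N" by (auto simp: Q_def Nstar_def)
  have "k i < 2 ^ N" if i: "i < s" for i
  proof (rule small_digits, rule ballI)
    fix l assume l: "l \<in> kappa (k i)"
    have "l \<le> (\<Sum>l\<in>kappa (k i). l)" using l by (intro member_le_sum) auto
    also have "\<dots> \<le> norm1 s k" unfolding norm1_def using i
      by (intro member_le_sum[of i "{..<s}" "\<lambda>i. \<Sum>l\<in>kappa (k i). l"]) auto
    finally show "l \<le> N" using n1 by simp
  qed
  then have "restrict k {..<s} \<in> PiE {..<s} (\<lambda>_. {..<2^N})"
    by (simp only: restrict_PiE_iff) simp
  moreover have "k = (\<lambda>i. if i < s then restrict k {..<s} i else 0)"
    using kidx by (auto simp: idx_def)
  ultimately show "k \<in> (\<lambda>g i. if i < s then g i else 0) ` PiE {..<s} (\<lambda>_. {..<2^N})" by blast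
qed

lemma finite_Q: "finite (Q s N)"
  by (rule finite_subset[OF Q_sub]) (auto intro: finite_PiE)

lemma kappa_pow2: "1 \<le> l \<Longrightarrow> kappa (2 ^ (l - 1)) = {l}"
  by (auto simp: kappa_def bit_exp_iff)

lemma card_Q_ge:
  assumes s: "1 \<le> s"
  shows "N \<le> card (Q s N)"
proof -
  define e where "e l = (\<lambda>i::nat. if i = 0 then (2::nat) ^ (l - 1) else 0)" for l
  have inj: "inj_on e {1..N}"
  proof (rule inj_onI)
    fix l l' assume ll: "l \<in> {1..N}" "l' \<in> {1..N}" "e l = e l'"
    then have "e l 0 = e l' 0" by simp
    then have "(2::nat) ^ (l - 1) = 2 ^ (l' - 1)" by (simp add: e_def)
    then have "l - 1 = l' - 1" by (simp add: power_inject_exp)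
    then show "l = l'" using ll by auto
  qed
  have sub: "e ` {1..N} \<subseteq> Q s N"
  proof
    fix k assume "k \<in> e ` {1..N}"
    then obtain l where l: "1 \<le> l" "l \<le> N" "k = e l" by auto
    have "k \<in> idx s" using l s by (auto simp: idx_def e_def)
    moreover have "k 0 \<noteq> 0" using l by (simp add: e_def)
    moreover have "norm1 s k = l"
    proof -
      have "norm1 s k = (\<Sum>l\<in>kappa (k 0). l) + (\<Sum>i\<in>{..<s}-{0}. \<Sum>l\<in>kappa (k i). l)"
        unfolding norm1_def by (rule sum_split_j) (use s in simp)
      also have "(\<Sum>i\<in>{..<s}-{0}. \<Sum>l\<in>kappa (k i). l) = 0" using l by (simp add: e_def)
      also have "kappa (k 0) = {l}" using l kappa_pow2[of l] by (simp add: e_def)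
      finally show ?thesis by simp
    qed
    moreover have "0 < s" using s by simp
    ultimately show "k \<in> Q s N" using l unfolding Q_def Nstar_def by blast
  qed
  have "card (e ` {1..N}) \<le> card (Q s N)" by (rule card_mono[OF finite_Q sub])
  then show ?thesis using card_image[OF inj] by simp
qed

lemma c_s_pos: "1 \<le> s \<Longrightarrow> 0 < B \<Longrightarrow> 0 < c_s s B"
  by (simp add: c_s_def lam_def)

lemma Nm_ge1:
  assumes s: "1 \<le> s" and B: "0 < B"
  shows "\<exists>m1. \<forall>m\<ge>m1. 1 \<le> Nm s B m"
proof -
  define c where "c = c_s s B"
  have c: "0 < c" unfolding c_def by (rule c_s_pos[OF s B])
  define m1 where "m1 = nat \<lceil>real (card (Q s 1)) / c\<rceil>"
  have "1 \<le> Nm s B m" if m: "m1 \<le> m" for m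
  proof -
    let ?X = "c * real m * 2 ^ m"
    let ?S = "{N. real (card (Q s N)) \<le> ?X}"
    have "real (card (Q s 1)) / c \<le> real m" using m unfolding m1_def by linarith
    then have "real (card (Q s 1)) \<le> c * real m" using c by (simp add: divide_le_eq mult.commute)
    also have "\<dots> = c * real m * 1" by simp
    also have "\<dots> \<le> ?X" by (rule mult_left_mono) (use c in auto)
    finally have one: "1 \<in> ?S" by simp
    have "bdd_above ?S"
    proof (rule bdd_aboveI)
      fix N assume "N \<in> ?S"
      then have "real N \<le> ?X" using card_Q_ge[OF s, of N] by (simp add: order_trans)
      then show "N \<le> nat \<lceil>?X\<rceil>" by linarith
    qed
    then have "1 \<le> Sup ?S" by (rule cSup_upper[OF one])
    then show ?thesis by (simp add: Nm_def c_def)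
  qed
  then show ?thesis by blast
qed

lemma half_pow_bound:
  assumes N: "1 \<le> N" and n: "N \<le> n"
  shows "(1/2::real)^n \<le> 2 powr (- real N + sqrt (real N)) * (2 powr (-1 / sqrt (real N)))^n"
proof -
  define r where "r = sqrt (real N)"
  have r1: "1 \<le> r" using N unfolding r_def by simp
  have rr: "r * r = real N" using N unfolding r_def by simp
  have "(1/2::real)^n = 2 powr (- real n)"
    by (simp add: powr_minus powr_realpow power_one_over inverse_eq_divide)
  moreover have "(2 powr (-1 / r))^n = 2 powr (-1 / r * real n)"
    by (simp add: powr_realpow[symmetric] powr_powr)
  moreover have "- real n \<le> - real N + r + (-1 / r * real n)"
  proof -
    have "0 \<le> (real n - real N) * (r - 1)" using n r1 by simp
    also have "(real n - real N) * (r - 1) = r * (- real N + r + (-1 / r * real n) + real n)"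
      using rr r1 by (simp add: field_simps)
    finally have "0 \<le> - real N + r + (-1 / r * real n) + real n"
      using r1 by (simp add: zero_le_mult_iff)
    then show ?thesis by simp
  qed
  ultimately show ?thesis unfolding r_def[symmetric]
    by (simp add: powr_add[symmetric])
qed

lemma y_bound:
  assumes N: "1 \<le> N"
  defines "y \<equiv> 2 powr (-1 / sqrt (real N))"
  shows "0 < y" "y < 1" "y / (1 - y) \<le> sqrt (real N) / ln 2"
proof -
  define r where "r = sqrt (real N)"
  have r: "0 < r" using N unfolding r_def by simp
  define u where "u = ln 2 / r"
  have u: "0 < u" using r by (simp add: u_def)
  have ye: "y = exp (- u)" unfolding y_def u_def r_def[symmetric] powr_def by simp
  show y0: "0 < y" by (simp add: ye)
  show y1: "y < 1" using u by (simp add: ye)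
  have "y * (1 + u) \<le> y * exp u" using y0 by (simp add: exp_ge_add_one_self add.commute)
  also have "y * exp u = 1" by (simp add: ye exp_minus)
  finally have "y * u \<le> 1 - y" by (simp add: algebra_simps)
  then have "y / (1 - y) \<le> 1 / u" using u y1 by (simp add: field_simps)
  then show "y / (1 - y) \<le> sqrt (real N) / ln 2" by (simp add: u_def r_def)
qed


lemma Nstar_idx: "Nstar s \<subseteq> idx s"
  by (auto simp: Nstar_def)

lemma tail_bound:
  fixes \<alpha> K1 :: real
  assumes s: "1 \<le> s" and \<alpha>: "0 < \<alpha>" and K1: "0 < K1" and sm: "smooth_cube s f"
    and hyp: "\<forall>k\<in>idx s. L1norm s (mixed_deriv s k f) \<le> K1 * \<alpha> ^ norm0 s k"
    and N: "1 \<le> N"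
  shows "(\<lambda>k. \<bar>fhat s f k\<bar>) summable_on (Nstar s - Q s N) \<and>
         (\<Sum>\<^sub>\<infinity>k\<in>Nstar s - Q s N. \<bar>fhat s f k\<bar>)
           < K1 * 2 powr (- real N + (2 + real s * \<alpha> / (ln 2)^2) * sqrt (real N))"
proof -
  let ?A = "Nstar s - Q s N"
  define r where "r = sqrt (real N)"
  have r1: "1 \<le> r" using N unfolding r_def by simp
  define y where "y = 2 powr (-1 / sqrt (real N))"
  have y0: "0 < y" and y1: "y < 1" and yb: "y / (1 - y) \<le> r / ln 2"
    using y_bound[OF N] unfolding y_def r_def by auto
  define w where "w k = \<alpha> ^ norm0 s k * y ^ norm1 s k" for k
  have wnn: "0 \<le> w k" for k using \<alpha> y0 by (simp add: w_def)
  define E where "E = exp (\<alpha> * y / (1 - y)) ^ s"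
  have fin: "sum w F \<le> E" if "finite F" "F \<subseteq> idx s" for F
    unfolding w_def E_def by (rule finite_sum_bound) (use \<alpha> y0 y1 that in auto)
  have wsum: "w summable_on idx s"
  proof (rule nonneg_bdd_above_summable_on)
    show "bdd_above (sum w ` {F. F \<subseteq> idx s \<and> finite F})"
      using fin by (auto intro!: bdd_aboveI[of _ E])
  qed (rule wnn)
  have winf: "infsum w (idx s) \<le> E" by (rule infsum_le_finite_sums[OF wsum fin])
  have Aidx: "?A \<subseteq> idx s" using Nstar_idx by blast
  have wA: "w summable_on ?A" by (rule summable_on_subset_banach[OF wsum Aidx])
  have infA: "infsum w ?A \<le> infsum w (idx s)"
    by (rule infsum_mono2[OF wA wsum Aidx]) (simp add: wnn)
  define c0 where "c0 = K1 * 2 powr (- real N + r)"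
  have c0: "0 < c0" using K1 by (simp add: c0_def)
  have bnd: "\<bar>fhat s f k\<bar> \<le> c0 * w k" if k: "k \<in> ?A" for k
  proof -
    have kidx: "k \<in> idx s" using k Aidx by blast
    have n1: "N \<le> norm1 s k" using k by (auto simp: Q_def)
    have "\<bar>fhat s f k\<bar> \<le> (1/2)^(norm1 s k) * L1norm s (mixed_deriv s k f)" by (rule WB[OF sm kidx])
    also have "\<dots> \<le> (1/2)^(norm1 s k) * (K1 * \<alpha> ^ norm0 s k)"
      by (rule mult_left_mono) (use hyp kidx in auto)
    also have "\<dots> \<le> (2 powr (- real N + r) * y ^ norm1 s k) * (K1 * \<alpha> ^ norm0 s k)"
      by (rule mult_right_mono) (use half_pow_bound[OF N n1] K1 \<alpha> in \<open>auto simp: r_def y_def\<close>)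
    also have "\<dots> = c0 * w k" by (simp add: c0_def w_def)
    finally show ?thesis .
  qed
  have cw: "(\<lambda>k. c0 * w k) summable_on ?A" by (rule summable_on_cmult_right[OF wA])
  have fs: "(\<lambda>k. \<bar>fhat s f k\<bar>) summable_on ?A"
    by (rule summable_on_comparison_test[OF cw]) (use bnd in auto)
  have "(\<Sum>\<^sub>\<infinity>k\<in>?A. \<bar>fhat s f k\<bar>) \<le> (\<Sum>\<^sub>\<infinity>k\<in>?A. c0 * w k)"
    by (rule infsum_mono[OF fs cw bnd])
  also have "\<dots> = c0 * infsum w ?A" by (rule infsum_cmult_right) (use wA in auto)
  also have "\<dots> \<le> c0 * E" using infA winf c0 by (simp add: mult_left_mono)
  also have "E \<le> 2 powr (real s * \<alpha> * r / (ln 2)^2)"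
  proof -
    have "\<alpha> * y / (1 - y) \<le> \<alpha> * (r / ln 2)"
      using mult_left_mono[OF yb, of \<alpha>] \<alpha> by simp
    then have "E \<le> exp (\<alpha> * (r / ln 2)) ^ s"
      unfolding E_def by (intro power_mono) auto
    also have "\<dots> = exp (real s * (\<alpha> * (r / ln 2)))" by (rule exp_of_nat_mult[symmetric])
    also have "\<dots> = 2 powr (real s * \<alpha> * r / (ln 2)^2)"
      by (simp add: powr_def power2_eq_square)
    finally show ?thesis .
  qed
  then have "c0 * E \<le> c0 * 2 powr (real s * \<alpha> * r / (ln 2)^2)" using c0 by simp
  also have "\<dots> = K1 * 2 powr (- real N + (1 + real s * \<alpha> / (ln 2)^2) * r)"
    by (simp add: c0_def powr_add[symmetric] algebra_simps)
  also have "\<dots> < K1 * 2 powr (- real N + (2 + real s * \<alpha> / (ln 2)^2) * r)"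
    using K1 r1 by (simp add: algebra_simps)
  finally show ?thesis using fs unfolding r_def by simp
qed

lemma ZS_bound:
  assumes fs: "(\<lambda>k. \<bar>fhat s f k\<bar>) summable_on A"
  shows "\<bar>\<Sum>\<^sub>\<infinity>k\<in>A. Zk s m C k * Sk s D k * fhat s f k\<bar> \<le> (\<Sum>\<^sub>\<infinity>k\<in>A. \<bar>fhat s f k\<bar>)"
proof -
  let ?g = "\<lambda>k. Zk s m C k * Sk s D k * fhat s f k"
  have gb: "norm (?g k) \<le> \<bar>fhat s f k\<bar>" for k
    by (simp add: Zk_def Sk_def abs_mult)
  have ga: "(\<lambda>k. norm (?g k)) summable_on A"
    by (rule summable_on_comparison_test[OF fs]) (use gb in auto)
  have "\<bar>infsum ?g A\<bar> = norm (infsum ?g A)" by simp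
  also have "\<dots> \<le> infsum (\<lambda>k. norm (?g k)) A"
    by (rule norm_infsum_bound) (use ga in simp)
  also have "\<dots> \<le> (\<Sum>\<^sub>\<infinity>k\<in>A. \<bar>fhat s f k\<bar>)"
    by (rule infsum_mono[OF ga fs gb])
  finally show ?thesis .
qed

theorem theorem3:
  fixes s :: nat and A B \<alpha> :: real
  assumes "s \<ge> 1" and "AB_ok s A B" and "\<alpha> > 0"
  shows "\<exists>D1 :: real. \<exists>m1 :: nat. \<forall>K1 f m C D.
     K1 > 0 \<longrightarrow> smooth_cube s f \<longrightarrow>
     (\<forall>k\<in>idx s. L1norm s (mixed_deriv s k f) \<le> K1 * \<alpha> ^ norm0 s k) \<longrightarrow>
     m \<ge> m1 \<longrightarrow>
       (\<lambda>k. \<bar>fhat s f k\<bar>) summable_on (Nstar s - Q s (Nm s B m)) \<and>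
       \<bar>\<Sum>\<^sub>\<infinity>k\<in>Nstar s - Q s (Nm s B m). Zk s m C k * Sk s D k * fhat s f k\<bar>
         \<le> (\<Sum>\<^sub>\<infinity>k\<in>Nstar s - Q s (Nm s B m). \<bar>fhat s f k\<bar>) \<and>
       (\<Sum>\<^sub>\<infinity>k\<in>Nstar s - Q s (Nm s B m). \<bar>fhat s f k\<bar>)
         < K1 * 2 powr (- real (Nm s B m) + D1 * sqrt (real (Nm s B m)))"
proof -
  have B: "0 < B" using assms(2) by (simp add: AB_ok_def)
  obtain m1 where m1: "\<forall>m\<ge>m1. 1 \<le> Nm s B m" using Nm_ge1[OF assms(1) B] by blast
  show ?thesis
  proof (intro exI[of _ "2 + real s * \<alpha> / (ln 2)^2"] exI[of _ m1] allI impI)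
    fix K1 :: real and f m C D
    assume K1: "K1 > 0" and sm: "smooth_cube s f"
      and hyp: "\<forall>k\<in>idx s. L1norm s (mixed_deriv s k f) \<le> K1 * \<alpha> ^ norm0 s k" and m: "m1 \<le> m"
    have N: "1 \<le> Nm s B m" using m1 m by blast
    note tb = tail_bound[OF assms(1) assms(3) K1 sm hyp N]
    show "(\<lambda>k. \<bar>fhat s f k\<bar>) summable_on (Nstar s - Q s (Nm s B m)) \<and>
       \<bar>\<Sum>\<^sub>\<infinity>k\<in>Nstar s - Q s (Nm s B m). Zk s m C k * Sk s D k * fhat s f k\<bar>
         \<le> (\<Sum>\<^sub>\<infinity>k\<in>Nstar s - Q s (Nm s B m). \<bar>fhat s f k\<bar>) \<and>
       (\<Sum>\<^sub>\<infinity>k\<in>Nstar s - Q s (Nm s B m). \<bar>fhat s f k\<bar>)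
         < K1 * 2 powr (- real (Nm s B m) + (2 + real s * \<alpha> / (ln 2)^2) * sqrt (real (Nm s B m)))"
      using tb ZS_bound[of s f "Nstar s - Q s (Nm s B m)" m C D] by blast
  qed
qed

end
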